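(* For all category presentations $C$ and $D$, the functor $[\![-]\!]:\mathbf{UnCurr}_\approx(C,D)\to\mathbf{Prof}([\![C]\!],[\![D]\!])$ induced by the semantics of uncurried profunctor presentations is an equivalence of categories.
   Context: Category presentations: a category presentation $C$ consists of sorts, function symbols $f:c\to c'$ between sorts, and a set $C_E$ of equations between parallel paths (a path is a composable finite list $f_0.\cdots.f_{n-1}$ of function symbols, or an empty path $1_c$; concatenation is written with a dot). Provable equality $\approx_C$ is the smallest equivalence relation on paths containing $C_E$ and closed under pre- and post-concatenation with composable function symbols; $[\![C]\!]$ is the category with objects the sorts and morphisms the $\approx_C$-classes of paths. A morphism of category presentations $F:C\to C'$ maps sorts to sorts and function symbols to paths (extended to paths by concatenation), sending each equation of $C_E$ to a $\approx_{C'}$-provable equality; $F\approx G$ means they agree on sorts and $F(f)\approx G(f)$ for every function symbol. Profunctors: for small categories $\mathcal C,\mathcal D$, a profunctor $\mathcal P:\mathcal C\nrightarrow\mathcal D$ is a category $\mathcal P$ with a functor $\pi:\mathcal P\to\mathbf 2$ ($\mathbf 2$ having objects $0,1$ and one non-identity arrow $0\to1$) with $\pi^{-1}(0)=\mathcal C$, $\pi^{-1}(1)=\mathcal D$. A morphism of profunctors $\mathcal C\nrightarrow\mathcal D$ is a functor commuting with the projections to $\mathbf 2$ and restricting to the identity on $\mathcal C$ and $\mathcal D$; they form $\mathbf{Prof}(\mathcal C,\mathcal D)$. Uncurried presentations: given category presentations $C,D$, an uncurried profunctor presentation $P:C\nrightarrow D$ consists of a set $\mathrm{Fun}(P)$ of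 profunctor function symbols $x:c\to d$ with $c$ a sort of $C$ and $d$ a sort of $D$, and a set $P_E$ of equations between cross-paths, where the associated category presentation $|P|$ has sorts $\mathrm{Sort}(C)+\mathrm{Sort}(D)$, function symbols $\mathrm{Fun}(C)+\mathrm{Fun}(P)+\mathrm{Fun}(D)$ and equations $C_E+P_E+D_E$, and a cross-path is a path of $|P|$ from a sort of $C$ to a sort of $D$. $\approx_P$ is the restriction of $\approx_{|P|}$ to cross-paths. A morphism $F:P\to P'$ of uncurried presentations $C\nrightarrow D$ assigns to each $x:c\to d$ in $\mathrm{Fun}(P)$ a cross-path $F(x):c\to d$ of $P'$ such that the extension $|F|:|P|\to|P'|$ acting as the identity on the sorts and function symbols of $C$ and $D$ is a morphism of category presentations; composition is by substitution, giving the category $\mathbf{UnCurr}(C,D)$. $F\approx F'$ iff $|F|\approx|F'|$; $\mathbf{UnCurr}_\approx(C,D)$ is the quotient. The semantics $[\![P]\!]$ is the category $[\![|P|]\!]$ with $\pi$ sending sorts of $C$ to $0$ and sorts of $D$ to $1$, a profunctor $[\![C]\!]\nrightarrow[\![D]\!]$; a morphism $F$ is sent to $[\![|F|]\!]$, and provably equal morphisms have equal image. *)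

theory Defs
  imports Main
begin

text \<open>A small category with objects of type 'o and arrows of type 'a.
  Composition is written in diagrammatic order: Comp f g is "first f, then g".\<close>

record ('o, 'a) cat =
  Ob   :: "'o set"
  Ar   :: "'a set"
  Dom  :: "'a \<Rightarrow> 'o"
  Cod  :: "'a \<Rightarrow> 'o"
  Id   :: "'o \<Rightarrow> 'a"
  Comp :: "'a \<Rightarrow> 'a \<Rightarrow> 'a"

definition is_category :: "('o, 'a) cat \<Rightarrow> bool" where
  "is_category C \<longleftrightarrow>
     (\<forall>a\<in>Ar C. Dom C a \<in> Ob C \<and> Cod C a \<in> Ob C) \<and>
     (\<forall>ob\<in>Ob C. Id C ob \<in> Ar C \<and> Dom C (Id C ob) = ob \<and> Cod C (Id C ob) = ob) \<and>
     (\<forall>a\<in>Ar C. \<forall>b\<in>Ar C. Cod C a = Dom C b \<longrightarrow>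
        Comp C a b \<in> Ar C \<and> Dom C (Comp C a b) = Dom C a \<and> Cod C (Comp C a b) = Cod C b) \<and>
     (\<forall>a\<in>Ar C. Comp C (Id C (Dom C a)) a = a \<and> Comp C a (Id C (Cod C a)) = a) \<and>
     (\<forall>a\<in>Ar C. \<forall>b\<in>Ar C. \<forall>c\<in>Ar C. Cod C a = Dom C b \<longrightarrow> Cod C b = Dom C c \<longrightarrow>
        Comp C (Comp C a b) c = Comp C a (Comp C b c))"

text \<open>A functor is a pair (object map, arrow map); only its values on the carriers matter.\<close>

definition is_functor ::
  "('o, 'a) cat \<Rightarrow> ('o2, 'a2) cat \<Rightarrow> ('o \<Rightarrow> 'o2) \<times> ('a \<Rightarrow> 'a2) \<Rightarrow> bool" where
  "is_functor C C' F \<longleftrightarrow>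
     (\<forall>ob\<in>Ob C. fst F ob \<in> Ob C') \<and>
     (\<forall>a\<in>Ar C. snd F a \<in> Ar C' \<and> Dom C' (snd F a) = fst F (Dom C a) \<and>
                Cod C' (snd F a) = fst F (Cod C a)) \<and>
     (\<forall>ob\<in>Ob C. snd F (Id C ob) = Id C' (fst F ob)) \<and>
     (\<forall>a\<in>Ar C. \<forall>b\<in>Ar C. Cod C a = Dom C b \<longrightarrow>
        snd F (Comp C a b) = Comp C' (snd F a) (snd F b))"

definition fun_eq_on ::
  "('o, 'a) cat \<Rightarrow> ('o \<Rightarrow> 'o2) \<times> ('a \<Rightarrow> 'a2) \<Rightarrow> ('o \<Rightarrow> 'o2) \<times> ('a \<Rightarrow> 'a2) \<Rightarrow> bool" where
  "fun_eq_on C F G \<longleftrightarrow> (\<forall>ob\<in>Ob C. fst F ob = fst G ob) \<and> (\<forall>a\<in>Ar C. snd F a = snd G a)"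

definition fun_comp ::
  "('o2 \<Rightarrow> 'o3) \<times> ('a2 \<Rightarrow> 'a3) \<Rightarrow> ('o1 \<Rightarrow> 'o2) \<times> ('a1 \<Rightarrow> 'a2) \<Rightarrow> ('o1 \<Rightarrow> 'o3) \<times> ('a1 \<Rightarrow> 'a3)" where
  "fun_comp G F = (fst G \<circ> fst F, snd G \<circ> snd F)"

text \<open>The category 2: objects False (=0) and True (=1), arrows pairs (x,y) with x \<le> y.\<close>

definition cat_two :: "(bool, bool \<times> bool) cat" where
  "cat_two = \<lparr>Ob = UNIV, Ar = {(x, y). x \<le> y}, Dom = fst, Cod = snd,
              Id = (\<lambda>x. (x, x)), Comp = (\<lambda>a b. (fst a, snd b))\<rparr>"

text \<open>A profunctor CC -/-> DD: a category P, a functor pi : P \<rightarrow> 2, and the identifications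
  of CC with the fibre pi^-1(0) and of DD with the fibre pi^-1(1) (given as injective functors
  whose images are exactly these fibres).\<close>

record ('o1, 'a1, 'o2, 'a2, 'o, 'a) profunctor =
  pcat   :: "('o, 'a) cat"
  pi_ob  :: "'o \<Rightarrow> bool"
  pi_ar  :: "'a \<Rightarrow> bool \<times> bool"
  in0_ob :: "'o1 \<Rightarrow> 'o"
  in0_ar :: "'a1 \<Rightarrow> 'a"
  in1_ob :: "'o2 \<Rightarrow> 'o"
  in1_ar :: "'a2 \<Rightarrow> 'a"

definition is_profunctor ::
  "('o1, 'a1) cat \<Rightarrow> ('o2, 'a2) cat \<Rightarrow> ('o1, 'a1, 'o2, 'a2, 'o, 'a) profunctor \<Rightarrow> bool" where
  "is_profunctor CC DD P \<longleftrightarrow>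
     is_category CC \<and> is_category DD \<and> is_category (pcat P) \<and>
     is_functor (pcat P) cat_two (pi_ob P, pi_ar P) \<and>
     is_functor CC (pcat P) (in0_ob P, in0_ar P) \<and>
     inj_on (in0_ob P) (Ob CC) \<and> inj_on (in0_ar P) (Ar CC) \<and>
     in0_ob P ` Ob CC = {ob \<in> Ob (pcat P). pi_ob P ob = False} \<and>
     in0_ar P ` Ar CC = {a \<in> Ar (pcat P). pi_ar P a = (False, False)} \<and>
     is_functor DD (pcat P) (in1_ob P, in1_ar P) \<and>
     inj_on (in1_ob P) (Ob DD) \<and> inj_on (in1_ar P) (Ar DD) \<and>
     in1_ob P ` Ob DD = {ob \<in> Ob (pcat P). pi_ob P ob = True} \<and>
     in1_ar P ` Ar DD = {a \<in> Ar (pcat P). pi_ar P a = (True, True)}"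

definition prof_morph ::
  "('o1, 'a1) cat \<Rightarrow> ('o2, 'a2) cat \<Rightarrow> ('o1, 'a1, 'o2, 'a2, 'o, 'a) profunctor \<Rightarrow>
   ('o1, 'a1, 'o2, 'a2, 'p, 'b) profunctor \<Rightarrow> ('o \<Rightarrow> 'p) \<times> ('a \<Rightarrow> 'b) \<Rightarrow> bool" where
  "prof_morph CC DD P P' G \<longleftrightarrow>
     is_functor (pcat P) (pcat P') G \<and>
     (\<forall>ob\<in>Ob (pcat P). pi_ob P' (fst G ob) = pi_ob P ob) \<and>
     (\<forall>a\<in>Ar (pcat P). pi_ar P' (snd G a) = pi_ar P a) \<and>
     (\<forall>ob\<in>Ob CC. fst G (in0_ob P ob) = in0_ob P' ob) \<and>
     (\<forall>a\<in>Ar CC. snd G (in0_ar P a) = in0_ar P' a) \<and>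
     (\<forall>ob\<in>Ob DD. fst G (in1_ob P ob) = in1_ob P' ob) \<and>
     (\<forall>a\<in>Ar DD. snd G (in1_ar P a) = in1_ar P' a)"

definition prof_iso ::
  "('o1, 'a1) cat \<Rightarrow> ('o2, 'a2) cat \<Rightarrow> ('o1, 'a1, 'o2, 'a2, 'o, 'a) profunctor \<Rightarrow>
   ('o1, 'a1, 'o2, 'a2, 'p, 'b) profunctor \<Rightarrow> bool" where
  "prof_iso CC DD P P' \<longleftrightarrow>
     (\<exists>G H. prof_morph CC DD P P' G \<and> prof_morph CC DD P' P H \<and>
        fun_eq_on (pcat P) (fun_comp H G) (\<lambda>ob. ob, \<lambda>a. a) \<and>
        fun_eq_on (pcat P') (fun_comp G H) (\<lambda>ob. ob, \<lambda>a. a))"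

text \<open>Sorts of type 's, function symbols of type 'f. A path is a pair (c, fs) of a start sort c
  and a list of function symbols fs = f0 ... f(n-1) composed in diagrammatic order; (c, []) is 1_c.\<close>

record ('s, 'f) catpres =
  Sorts :: "'s set"
  Funs  :: "'f set"
  fsrc  :: "'f \<Rightarrow> 's"
  ftgt  :: "'f \<Rightarrow> 's"
  Eqs   :: "(('s \<times> 'f list) \<times> ('s \<times> 'f list)) set"

fun is_chain :: "('f \<Rightarrow> 's) \<Rightarrow> ('f \<Rightarrow> 's) \<Rightarrow> 'f set \<Rightarrow> 's \<Rightarrow> 'f list \<Rightarrow> bool" where
  "is_chain s t F c [] = True"
| "is_chain s t F c (f # fs) = (f \<in> F \<and> s f = c \<and> is_chain s t F (t f) fs)"

definition is_path :: "('s, 'f) catpres \<Rightarrow> 's \<times> 'f list \<Rightarrow> bool" where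
  "is_path C p \<longleftrightarrow> fst p \<in> Sorts C \<and> is_chain (fsrc C) (ftgt C) (Funs C) (fst p) (snd p)"

definition path_end :: "('s, 'f) catpres \<Rightarrow> 's \<times> 'f list \<Rightarrow> 's" where
  "path_end C p = (if snd p = [] then fst p else ftgt C (last (snd p)))"

definition parallel :: "('s, 'f) catpres \<Rightarrow> 's \<times> 'f list \<Rightarrow> 's \<times> 'f list \<Rightarrow> bool" where
  "parallel C p q \<longleftrightarrow> fst p = fst q \<and> path_end C p = path_end C q"

definition valid_catpres :: "('s, 'f) catpres \<Rightarrow> bool" where
  "valid_catpres C \<longleftrightarrow>
     (\<forall>f\<in>Funs C. fsrc C f \<in> Sorts C \<and> ftgt C f \<in> Sorts C) \<and>
     (\<forall>(p, q)\<in>Eqs C. is_path C p \<and> is_path C q \<and> parallel C p q)"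

inductive peq :: "('s, 'f) catpres \<Rightarrow> 's \<times> 'f list \<Rightarrow> 's \<times> 'f list \<Rightarrow> bool" for C where
  peq_ax:    "(p, q) \<in> Eqs C \<Longrightarrow> peq C p q"
| peq_refl:  "is_path C p \<Longrightarrow> peq C p p"
| peq_sym:   "peq C p q \<Longrightarrow> peq C q p"
| peq_trans: "peq C p q \<Longrightarrow> peq C q r \<Longrightarrow> peq C p r"
| peq_post:  "peq C p q \<Longrightarrow> f \<in> Funs C \<Longrightarrow> fsrc C f = path_end C p \<Longrightarrow>
                peq C (fst p, snd p @ [f]) (fst q, snd q @ [f])"
| peq_pre:   "peq C p q \<Longrightarrow> f \<in> Funs C \<Longrightarrow> ftgt C f = fst p \<Longrightarrow>
                peq C (fsrc C f, f # snd p) (fsrc C f, f # snd q)"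

definition pclass :: "('s, 'f) catpres \<Rightarrow> 's \<times> 'f list \<Rightarrow> ('s \<times> 'f list) set" where
  "pclass C p = {q. peq C p q}"

definition rep :: "('s \<times> 'f list) set \<Rightarrow> 's \<times> 'f list" where
  "rep X = (SOME p. p \<in> X)"

definition sem :: "('s, 'f) catpres \<Rightarrow> ('s, ('s \<times> 'f list) set) cat" where
  "sem C = \<lparr>Ob = Sorts C,
            Ar = {pclass C p | p. is_path C p},
            Dom = (\<lambda>X. fst (rep X)),
            Cod = (\<lambda>X. path_end C (rep X)),
            Id = (\<lambda>c. pclass C (c, [])),
            Comp = (\<lambda>X Y. pclass C (fst (rep X), snd (rep X) @ snd (rep Y)))\<rparr>"

definition apply_path ::
  "('s \<Rightarrow> 's2) \<Rightarrow> ('f \<Rightarrow> 's2 \<times> 'f2 list) \<Rightarrow> 's \<times> 'f list \<Rightarrow> 's2 \<times> 'f2 list" where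
  "apply_path Fs Ff p = (Fs (fst p), concat (map (\<lambda>f. snd (Ff f)) (snd p)))"

definition catpres_morph ::
  "('s, 'f) catpres \<Rightarrow> ('s2, 'f2) catpres \<Rightarrow> ('s \<Rightarrow> 's2) \<Rightarrow> ('f \<Rightarrow> 's2 \<times> 'f2 list) \<Rightarrow> bool" where
  "catpres_morph C C' Fs Ff \<longleftrightarrow>
     (\<forall>c\<in>Sorts C. Fs c \<in> Sorts C') \<and>
     (\<forall>f\<in>Funs C. is_path C' (Ff f) \<and> fst (Ff f) = Fs (fsrc C f) \<and>
                  path_end C' (Ff f) = Fs (ftgt C f)) \<and>
     (\<forall>(p, q)\<in>Eqs C. peq C' (apply_path Fs Ff p) (apply_path Fs Ff q))"

definition catpres_equiv ::
  "('s, 'f) catpres \<Rightarrow> ('s2, 'f2) catpres \<Rightarrow> ('s \<Rightarrow> 's2) \<Rightarrow> ('f \<Rightarrow> 's2 \<times> 'f2 list) \<Rightarrow>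
   ('s \<Rightarrow> 's2) \<Rightarrow> ('f \<Rightarrow> 's2 \<times> 'f2 list) \<Rightarrow> bool" where
  "catpres_equiv C C' Fs Ff Gs Gf \<longleftrightarrow>
     (\<forall>c\<in>Sorts C. Fs c = Gs c) \<and> (\<forall>f\<in>Funs C. peq C' (Ff f) (Gf f))"

definition sem_morph ::
  "('s2, 'f2) catpres \<Rightarrow> ('s \<Rightarrow> 's2) \<Rightarrow> ('f \<Rightarrow> 's2 \<times> 'f2 list) \<Rightarrow>
   ('s \<Rightarrow> 's2) \<times> (('s \<times> 'f list) set \<Rightarrow> ('s2 \<times> 'f2 list) set)" where
  "sem_morph C' Fs Ff = (Fs, \<lambda>X. pclass C' (apply_path Fs Ff (rep X)))"

text \<open>Profunctor function symbols of type 'x; the equations are between paths of |P|, whose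
  sorts are Sort(C)+Sort(D) and whose function symbols are Fun(C)+Fun(P)+Fun(D).\<close>

record ('c, 'd, 'cf, 'df, 'x) uncpres =
  UFuns :: "'x set"
  usrc  :: "'x \<Rightarrow> 'c"
  utgt  :: "'x \<Rightarrow> 'd"
  UEqs  :: "((('c + 'd) \<times> ('cf + 'x + 'df) list) \<times> (('c + 'd) \<times> ('cf + 'x + 'df) list)) set"

definition embC :: "'c \<times> 'cf list \<Rightarrow> ('c + 'd) \<times> ('cf + 'x + 'df) list" where
  "embC p = (Inl (fst p), map Inl (snd p))"

definition embD :: "'d \<times> 'df list \<Rightarrow> ('c + 'd) \<times> ('cf + 'x + 'df) list" where
  "embD p = (Inr (fst p), map (\<lambda>g. Inr (Inr g)) (snd p))"

definition tot ::
  "('c, 'cf) catpres \<Rightarrow> ('d, 'df) catpres \<Rightarrow> ('c, 'd, 'cf, 'df, 'x) uncpres \<Rightarrow>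
   ('c + 'd, 'cf + 'x + 'df) catpres" where
  "tot C D P = \<lparr>Sorts = Inl ` Sorts C \<union> Inr ` Sorts D,
     Funs = Inl ` Funs C \<union> (\<lambda>x. Inr (Inl x)) ` UFuns P \<union> (\<lambda>g. Inr (Inr g)) ` Funs D,
     fsrc = case_sum (\<lambda>f. Inl (fsrc C f)) (case_sum (\<lambda>x. Inl (usrc P x)) (\<lambda>g. Inr (fsrc D g))),
     ftgt = case_sum (\<lambda>f. Inl (ftgt C f)) (case_sum (\<lambda>x. Inr (utgt P x)) (\<lambda>g. Inr (ftgt D g))),
     Eqs = (\<lambda>(p, q). (embC p, embC q)) ` Eqs C \<union> UEqs P \<union> (\<lambda>(p, q). (embD p, embD q)) ` Eqs D\<rparr>"

definition cross_path ::
  "('c, 'cf) catpres \<Rightarrow> ('d, 'df) catpres \<Rightarrow> ('c, 'd, 'cf, 'df, 'x) uncpres \<Rightarrow>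
   ('c + 'd) \<times> ('cf + 'x + 'df) list \<Rightarrow> bool" where
  "cross_path C D P p \<longleftrightarrow> is_path (tot C D P) p \<and> isl (fst p) \<and> \<not> isl (path_end (tot C D P) p)"

definition valid_unc ::
  "('c, 'cf) catpres \<Rightarrow> ('d, 'df) catpres \<Rightarrow> ('c, 'd, 'cf, 'df, 'x) uncpres \<Rightarrow> bool" where
  "valid_unc C D P \<longleftrightarrow>
     (\<forall>x\<in>UFuns P. usrc P x \<in> Sorts C \<and> utgt P x \<in> Sorts D) \<and>
     (\<forall>(p, q)\<in>UEqs P. cross_path C D P p \<and> cross_path C D P q \<and> parallel (tot C D P) p q)"

definition totF ::
  "('c, 'cf) catpres \<Rightarrow> ('d, 'df) catpres \<Rightarrow> ('x \<Rightarrow> ('c + 'd) \<times> ('cf + 'y + 'df) list) \<Rightarrow>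
   ('cf + 'x + 'df) \<Rightarrow> ('c + 'd) \<times> ('cf + 'y + 'df) list" where
  "totF C D F = case_sum (\<lambda>f. (Inl (fsrc C f), [Inl f]))
                  (case_sum F (\<lambda>g. (Inr (fsrc D g), [Inr (Inr g)])))"

definition unc_morph ::
  "('c, 'cf) catpres \<Rightarrow> ('d, 'df) catpres \<Rightarrow> ('c, 'd, 'cf, 'df, 'x) uncpres \<Rightarrow>
   ('c, 'd, 'cf, 'df, 'y) uncpres \<Rightarrow> ('x \<Rightarrow> ('c + 'd) \<times> ('cf + 'y + 'df) list) \<Rightarrow> bool" where
  "unc_morph C D P P' F \<longleftrightarrow>
     (\<forall>x\<in>UFuns P. cross_path C D P' (F x) \<and> fst (F x) = Inl (usrc P x) \<and>
                   path_end (tot C D P') (F x) = Inr (utgt P x)) \<and>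
     catpres_morph (tot C D P) (tot C D P') (\<lambda>s. s) (totF C D F)"

definition unc_equiv ::
  "('c, 'cf) catpres \<Rightarrow> ('d, 'df) catpres \<Rightarrow> ('c, 'd, 'cf, 'df, 'x) uncpres \<Rightarrow>
   ('c, 'd, 'cf, 'df, 'y) uncpres \<Rightarrow> ('x \<Rightarrow> ('c + 'd) \<times> ('cf + 'y + 'df) list) \<Rightarrow>
   ('x \<Rightarrow> ('c + 'd) \<times> ('cf + 'y + 'df) list) \<Rightarrow> bool" where
  "unc_equiv C D P P' F F' \<longleftrightarrow>
     catpres_equiv (tot C D P) (tot C D P') (\<lambda>s. s) (totF C D F) (\<lambda>s. s) (totF C D F')"

definition unc_id ::
  "('c, 'd, 'cf, 'df, 'x) uncpres \<Rightarrow> 'x \<Rightarrow> ('c + 'd) \<times> ('cf + 'x + 'df) list" where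
  "unc_id P x = (Inl (usrc P x), [Inr (Inl x)])"

definition unc_comp ::
  "('c, 'cf) catpres \<Rightarrow> ('d, 'df) catpres \<Rightarrow> ('y \<Rightarrow> ('c + 'd) \<times> ('cf + 'z + 'df) list) \<Rightarrow>
   ('x \<Rightarrow> ('c + 'd) \<times> ('cf + 'y + 'df) list) \<Rightarrow> 'x \<Rightarrow> ('c + 'd) \<times> ('cf + 'z + 'df) list" where
  "unc_comp C D G F x = apply_path (\<lambda>s. s) (totF C D G) (F x)"

text \<open>Semantics [[P]] as a profunctor [[C]] -/-> [[D]]: the category [[|P|]], with pi sending sorts
  of C to 0 (False) and sorts of D to 1 (True); [[C]] and [[D]] are identified with the fibres
  via the inclusions of C and D into |P|.\<close>

definition sem_unc ::
  "('c, 'cf) catpres \<Rightarrow> ('d, 'df) catpres \<Rightarrow> ('c, 'd, 'cf, 'df, 'x) uncpres \<Rightarrow>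
   ('c, ('c \<times> 'cf list) set, 'd, ('d \<times> 'df list) set,
    'c + 'd, (('c + 'd) \<times> ('cf + 'x + 'df) list) set) profunctor" where
  "sem_unc C D P =
     \<lparr>pcat = sem (tot C D P),
      pi_ob = (\<lambda>s. \<not> isl s),
      pi_ar = (\<lambda>X. (\<not> isl (Dom (sem (tot C D P)) X), \<not> isl (Cod (sem (tot C D P)) X))),
      in0_ob = Inl,
      in0_ar = (\<lambda>X. pclass (tot C D P) (embC (rep X))),
      in1_ob = Inr,
      in1_ar = (\<lambda>X. pclass (tot C D P) (embD (rep X)))\<rparr>"

definition sem_unc_morph ::
  "('c, 'cf) catpres \<Rightarrow> ('d, 'df) catpres \<Rightarrow> ('c, 'd, 'cf, 'df, 'y) uncpres \<Rightarrow>
   ('x \<Rightarrow> ('c + 'd) \<times> ('cf + 'y + 'df) list) \<Rightarrow>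
   ('c + 'd \<Rightarrow> 'c + 'd) \<times> ((('c + 'd) \<times> ('cf + 'x + 'df) list) set \<Rightarrow> (('c + 'd) \<times> ('cf + 'y + 'df) list) set)" where
  "sem_unc_morph C D P' F = sem_morph (tot C D P') (\<lambda>s. s) (totF C D F)"

end

theory Submission
  imports Defs
begin

definition pcomp :: "'s \<times> 'f list \<Rightarrow> 's \<times> 'f list \<Rightarrow> 's \<times> 'f list" where
  "pcomp p q = (fst p, snd p @ snd q)"

lemma is_chain_append:
  "is_chain s t F c (xs @ ys) \<longleftrightarrow> is_chain s t F c xs \<and> is_chain s t F (if xs = [] then c else t (last xs)) ys"
  by (induction xs arbitrary: c) auto

lemma is_chain_last: "is_chain s t F c fs \<Longrightarrow> fs \<noteq> [] \<Longrightarrow> last fs \<in> F"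
  by (induction fs arbitrary: c) auto

lemma is_chain_set: "is_chain s t F c fs \<Longrightarrow> set fs \<subseteq> F"
  by (induction fs arbitrary: c) auto

lemma path_end_pcomp: "path_end C p = fst q \<Longrightarrow> path_end C (pcomp p q) = path_end C q"
  by (auto simp: path_end_def pcomp_def)

lemma is_path_pcomp: "is_path C p \<Longrightarrow> is_path C q \<Longrightarrow> path_end C p = fst q \<Longrightarrow> is_path C (pcomp p q)"
  by (auto simp: is_path_def pcomp_def is_chain_append path_end_def)

lemma path_end_Cons: "path_end C (c, f # fs) = path_end C (ftgt C f, fs)"
  by (auto simp: path_end_def)

lemma path_end_in: "valid_catpres C \<Longrightarrow> is_path C p \<Longrightarrow> path_end C p \<in> Sorts C"
  unfolding path_end_def is_path_def valid_catpres_def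
  using is_chain_last by fastforce

lemma peq_props:
  assumes "valid_catpres C"
  shows "peq C p q \<Longrightarrow> is_path C p \<and> is_path C q \<and> fst p = fst q \<and> path_end C p = path_end C q"
proof (induction rule: peq.induct)
  case (peq_ax p q)
  then show ?case using assms unfolding valid_catpres_def parallel_def by auto
next
  case (peq_post p q f)
  then show ?case using assms
    by (auto simp: is_path_def is_chain_append path_end_def valid_catpres_def)
next
  case (peq_pre p q f)
  then show ?case using assms
    by (auto simp: is_path_def path_end_def valid_catpres_def)
qed auto

lemma peq_post_list:
  assumes "valid_catpres C"
  shows "peq C p q \<Longrightarrow> is_chain (fsrc C) (ftgt C) (Funs C) (path_end C p) fs \<Longrightarrow>
     peq C (fst p, snd p @ fs) (fst q, snd q @ fs)"
proof (induction fs arbitrary: p q)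
  case Nil
  then show ?case by simp
next
  case (Cons f fs)
  have 1: "peq C (fst p, snd p @ [f]) (fst q, snd q @ [f])"
    using Cons by (intro peq_post) auto
  have "path_end C (fst p, snd p @ [f]) = ftgt C f" by (simp add: path_end_def)
  then have "peq C (fst (fst p, snd p @ [f]), snd (fst p, snd p @ [f]) @ fs)
                   (fst (fst q, snd q @ [f]), snd (fst q, snd q @ [f]) @ fs)"
    using Cons.IH[OF 1] Cons.prems by auto
  then show ?case by simp
qed

lemma peq_pre_list:
  assumes "valid_catpres C"
  shows "peq C p q \<Longrightarrow> is_chain (fsrc C) (ftgt C) (Funs C) c fs \<Longrightarrow>
     (if fs = [] then c else ftgt C (last fs)) = fst p \<Longrightarrow>
     peq C (c, fs @ snd p) (c, fs @ snd q)"
proof (induction fs arbitrary: c)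
  case Nil
  then have "fst q = c" using peq_props[OF assms] by auto
  then show ?case using Nil by (cases p; cases q) auto
next
  case (Cons f fs)
  have "peq C (ftgt C f, fs @ snd p) (ftgt C f, fs @ snd q)"
    using Cons by (intro Cons.IH) (auto split: if_splits)
  from peq_pre[OF this, of f] Cons.prems show ?case by auto
qed

lemma peq_comp:
  assumes "valid_catpres C"
  shows "peq C p p' \<Longrightarrow> peq C q q' \<Longrightarrow> path_end C p = fst q \<Longrightarrow>
    peq C (pcomp p q) (pcomp p' q')"
proof -
  assume a: "peq C p p'" "peq C q q'" "path_end C p = fst q"
  have pp: "is_path C p'" "is_path C q" "fst p = fst p'" "path_end C p = path_end C p'"
    "fst q = fst q'"
    using peq_props[OF assms a(1)] peq_props[OF assms a(2)] by auto
  have 1: "peq C (pcomp p q) (pcomp p' q)"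
    unfolding pcomp_def using peq_post_list[OF assms a(1)] pp a(3)
    by (auto simp: is_path_def)
  have 2: "peq C (pcomp p' q) (pcomp p' q')"
    unfolding pcomp_def using peq_pre_list[OF assms a(2), of "fst p'" "snd p'"] pp a(3)
    by (auto simp: is_path_def path_end_def)
  show ?thesis using peq_trans[OF 1 2] .
qed

lemma rep_pclass:
  assumes "valid_catpres C" "is_path C p"
  shows "peq C p (rep (pclass C p))"
proof -
  have "p \<in> pclass C p" using assms by (simp add: pclass_def peq_refl)
  then have "rep (pclass C p) \<in> pclass C p" unfolding rep_def by (rule someI)
  then show ?thesis by (simp add: pclass_def)
qed

lemma pclass_eq_iff:
  assumes "valid_catpres C" "is_path C p"
  shows "pclass C p = pclass C q \<longleftrightarrow> peq C p q"
proof
  assume "pclass C p = pclass C q"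
  moreover have "p \<in> pclass C p" using assms by (simp add: pclass_def peq_refl)
  ultimately show "peq C p q" by (auto simp: pclass_def intro: peq_sym)
next
  assume "peq C p q"
  then show "pclass C p = pclass C q"
    by (auto simp: pclass_def intro: peq_trans peq_sym)
qed

lemma pclass_rep_eq:
  assumes "valid_catpres C" "is_path C p"
  shows "pclass C (rep (pclass C p)) = pclass C p"
  using rep_pclass[OF assms] pclass_eq_iff[OF assms] by (metis peq_sym peq_props[OF assms(1)] pclass_eq_iff[OF assms(1)])

lemma rep_path:
  assumes "valid_catpres C" "is_path C p"
  shows "is_path C (rep (pclass C p))" "fst (rep (pclass C p)) = fst p"
    "path_end C (rep (pclass C p)) = path_end C p"
  using peq_props[OF assms(1) rep_pclass[OF assms]] by auto

lemma sem_Ar: "X \<in> Ar (sem C) \<longleftrightarrow> (\<exists>p. is_path C p \<and> X = pclass C p)"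
  by (auto simp: sem_def)

lemma sem_ArI: "is_path C p \<Longrightarrow> pclass C p \<in> Ar (sem C)"
  unfolding sem_def by (cases p) auto

lemma sem_simps:
  assumes "valid_catpres C" "is_path C p"
  shows "Dom (sem C) (pclass C p) = fst p" "Cod (sem C) (pclass C p) = path_end C p"
  using rep_path[OF assms] by (auto simp: sem_def)

lemma sem_comp:
  assumes "valid_catpres C" "is_path C p" "is_path C q" "path_end C p = fst q"
  shows "Comp (sem C) (pclass C p) (pclass C q) = pclass C (pcomp p q)"
proof -
  have "Comp (sem C) (pclass C p) (pclass C q) = pclass C (pcomp (rep (pclass C p)) (rep (pclass C q)))"
    by (simp add: sem_def pcomp_def)
  also have "\<dots> = pclass C (pcomp p q)"
  proof -
    have "peq C (pcomp p q) (pcomp (rep (pclass C p)) (rep (pclass C q)))"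
      using assms by (intro peq_comp rep_pclass) auto
    then show ?thesis using pclass_eq_iff[OF assms(1)] is_path_pcomp assms by metis
  qed
  finally show ?thesis .
qed

lemma sem_id: "Id (sem C) c = pclass C (c, [])"
  by (simp add: sem_def)

lemma sem_rep:
  assumes "valid_catpres C" "X \<in> Ar (sem C)"
  shows "is_path C (rep X)" "pclass C (rep X) = X"
  using assms rep_path pclass_rep_eq by (metis sem_Ar)+

lemma sem_category:
  assumes "valid_catpres C"
  shows "is_category (sem C)"
proof -
  have pathId: "c \<in> Sorts C \<Longrightarrow> is_path C (c, [])" for c by (simp add: is_path_def)
  show ?thesis
  unfolding is_category_def
  proof (intro conjI ballI impI)
    fix a assume "a \<in> Ar (sem C)"
    then obtain p where p: "is_path C p" "a = pclass C p" by (auto simp: sem_Ar)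
    show "Dom (sem C) a \<in> Ob (sem C)" "Cod (sem C) a \<in> Ob (sem C)"
      using p sem_simps[OF assms p(1)] path_end_in[OF assms p(1)]
      by (auto simp: sem_def is_path_def)
    show "Comp (sem C) (Id (sem C) (Dom (sem C) a)) a = a"
      using p sem_simps[OF assms p(1)] sem_comp[OF assms pathId p(1)]
      by (auto simp: sem_id pcomp_def is_path_def path_end_def)
    show "Comp (sem C) a (Id (sem C) (Cod (sem C) a)) = a"
      using p sem_simps[OF assms p(1)] sem_comp[OF assms p(1) pathId[OF path_end_in[OF assms p(1)]]]
      by (auto simp: sem_id pcomp_def path_end_def)
  next
    fix ob assume "ob \<in> Ob (sem C)"
    then have "ob \<in> Sorts C" by (simp add: sem_def)
    then show "Id (sem C) ob \<in> Ar (sem C)" "Dom (sem C) (Id (sem C) ob) = ob"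
      "Cod (sem C) (Id (sem C) ob) = ob"
      using sem_simps[OF assms pathId] pathId by (auto simp: sem_id sem_Ar path_end_def; blast)+
  next
    fix a b assume ab: "a \<in> Ar (sem C)" "b \<in> Ar (sem C)" "Cod (sem C) a = Dom (sem C) b"
    then obtain p q where p: "is_path C p" "a = pclass C p" and q: "is_path C q" "b = pclass C q"
      by (auto simp: sem_Ar)
    have e: "path_end C p = fst q" using ab p q sem_simps[OF assms p(1)] sem_simps[OF assms q(1)] by simp
    have pq: "is_path C (pcomp p q)" using is_path_pcomp[OF p(1) q(1) e] .
    show "Comp (sem C) a b \<in> Ar (sem C)" "Dom (sem C) (Comp (sem C) a b) = Dom (sem C) a"
      "Cod (sem C) (Comp (sem C) a b) = Cod (sem C) b"
      using p q sem_comp[OF assms p(1) q(1) e] sem_simps[OF assms pq] sem_simps[OF assms p(1)]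
        sem_simps[OF assms q(1)] pq path_end_pcomp[OF e]
      by (auto simp: sem_Ar pcomp_def)
  next
    fix a b c assume abc: "a \<in> Ar (sem C)" "b \<in> Ar (sem C)" "c \<in> Ar (sem C)"
      "Cod (sem C) a = Dom (sem C) b" "Cod (sem C) b = Dom (sem C) c"
    then obtain p q r where p: "is_path C p" "a = pclass C p" and q: "is_path C q" "b = pclass C q"
      and r: "is_path C r" "c = pclass C r"
      by (auto simp: sem_Ar)
    have e1: "path_end C p = fst q" using abc p q sem_simps[OF assms p(1)] sem_simps[OF assms q(1)] by simp
    have e2: "path_end C q = fst r" using abc r q sem_simps[OF assms r(1)] sem_simps[OF assms q(1)] by simp
    have pq: "is_path C (pcomp p q)" using is_path_pcomp[OF p(1) q(1) e1] .
    have qr: "is_path C (pcomp q r)" using is_path_pcomp[OF q(1) r(1) e2] .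
    show "Comp (sem C) (Comp (sem C) a b) c = Comp (sem C) a (Comp (sem C) b c)"
      using p q r sem_comp[OF assms p(1) q(1) e1] sem_comp[OF assms q(1) r(1) e2]
        sem_comp[OF assms pq r(1)] sem_comp[OF assms p(1) qr] path_end_pcomp[OF e1] path_end_pcomp[OF e2] e1 e2
      by (auto simp: pcomp_def)
  qed
qed

lemma apply_pcomp: "apply_path Fs Ff (pcomp p q) = pcomp (apply_path Fs Ff p) (apply_path Fs Ff q)"
  by (simp add: apply_path_def pcomp_def)

lemma apply_Cons: "apply_path Fs Ff (c, f # fs) = pcomp (Fs c, snd (Ff f)) (apply_path Fs Ff (d, fs))"
  by (simp add: apply_path_def pcomp_def)

lemma apply_Nil: "apply_path Fs Ff (c, []) = (Fs c, [])"
  by (simp add: apply_path_def)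

lemma apply_fst: "fst (apply_path Fs Ff p) = Fs (fst p)"
  by (simp add: apply_path_def)

definition premorph where
  "premorph C C' Fs Ff \<longleftrightarrow> (\<forall>c\<in>Sorts C. Fs c \<in> Sorts C') \<and>
     (\<forall>f\<in>Funs C. is_path C' (Ff f) \<and> fst (Ff f) = Fs (fsrc C f) \<and>
                  path_end C' (Ff f) = Fs (ftgt C f))"

lemma morph_premorph: "catpres_morph C C' Fs Ff \<Longrightarrow> premorph C C' Fs Ff"
  by (simp add: catpres_morph_def premorph_def)

lemma morph_path0:
  assumes "valid_catpres C" "premorph C C' Fs Ff" "is_path C p"
  shows "is_path C' (apply_path Fs Ff p) \<and>
         path_end C' (apply_path Fs Ff p) = Fs (path_end C p)"
proof -
  obtain c fs where p: "p = (c, fs)" by (cases p)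
  have "c \<in> Sorts C \<Longrightarrow> is_chain (fsrc C) (ftgt C) (Funs C) c fs \<Longrightarrow>
    is_path C' (apply_path Fs Ff (c, fs)) \<and>
         path_end C' (apply_path Fs Ff (c, fs)) = Fs (path_end C (c, fs))"
  proof (induction fs arbitrary: c)
    case Nil
    then show ?case using assms(2) by (auto simp: apply_Nil is_path_def path_end_def premorph_def)
  next
    case (Cons f fs)
    have f: "f \<in> Funs C" "fsrc C f = c" using Cons by auto
    have ff: "is_path C' (Ff f)" "fst (Ff f) = Fs c" "path_end C' (Ff f) = Fs (ftgt C f)"
      using assms(2) f by (auto simp: premorph_def)
    have tg: "ftgt C f \<in> Sorts C" using assms(1) f by (auto simp: valid_catpres_def)
    have IH: "is_path C' (apply_path Fs Ff (ftgt C f, fs)) \<and>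
         path_end C' (apply_path Fs Ff (ftgt C f, fs)) = Fs (path_end C (ftgt C f, fs))"
      using Cons.IH[of "ftgt C f"] Cons.prems tg by auto
    have eq: "apply_path Fs Ff (c, f # fs) = pcomp (Ff f) (apply_path Fs Ff (ftgt C f, fs))"
      using apply_Cons[of Fs Ff c f fs "ftgt C f"] ff(2) by (cases "Ff f") auto
    have e: "path_end C' (Ff f) = fst (apply_path Fs Ff (ftgt C f, fs))"
      using ff(3) by (simp add: apply_fst)
    show ?case using eq is_path_pcomp[OF ff(1) _ e] IH path_end_pcomp[OF e] path_end_Cons
      by metis
  qed
  then show ?thesis using assms(3) p by (auto simp: is_path_def)
qed

lemma morph_path:
  assumes "valid_catpres C" "catpres_morph C C' Fs Ff" "is_path C p"
  shows "is_path C' (apply_path Fs Ff p) \<and>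
         path_end C' (apply_path Fs Ff p) = Fs (path_end C p)"
  using morph_path0[OF assms(1) morph_premorph[OF assms(2)] assms(3)] .

lemma morph_peq:
  assumes "valid_catpres C" "valid_catpres C'" "catpres_morph C C' Fs Ff"
  shows "peq C p q \<Longrightarrow> peq C' (apply_path Fs Ff p) (apply_path Fs Ff q)"
proof (induction rule: peq.induct)
  case (peq_ax p q)
  then show ?case using assms(3) by (auto simp: catpres_morph_def)
next
  case (peq_refl p)
  then show ?case using morph_path[OF assms(1,3) peq_refl] by (metis peq.peq_refl)
next
  case (peq_sym p q)
  show ?case using peq_sym.IH by (rule peq.peq_sym)
next
  case (peq_trans p q r)
  show ?case using peq_trans.IH by (rule peq.peq_trans)
next
  case (peq_post p q f)
  have pp: "is_path C p" "is_path C q" "path_end C p = path_end C q" using peq_props[OF assms(1) peq_post(1)] by auto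
  have ff: "is_path C' (Ff f)" "fst (Ff f) = Fs (fsrc C f)"
    using assms(3) peq_post by (auto simp: catpres_morph_def)
  have e: "(fst p, snd p @ [f]) = pcomp p (fsrc C f, [f])" "(fst q, snd q @ [f]) = pcomp q (fsrc C f, [f])"
    by (auto simp: pcomp_def)
  have a1: "apply_path Fs Ff (fsrc C f, [f]) = Ff f" using ff(2)
    by (cases "Ff f") (auto simp: apply_path_def)
  have en: "path_end C' (apply_path Fs Ff p) = fst (Ff f)"
    using morph_path[OF assms(1,3) pp(1)] ff peq_post by auto
  show ?case unfolding e apply_pcomp a1
    by (rule peq_comp[OF assms(2) peq_post.IH peq.peq_refl[OF ff(1)] en])
next
  case (peq_pre p q f)
  have pp: "is_path C p" "is_path C q" "fst p = fst q" using peq_props[OF assms(1) peq_pre(1)] by auto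
  have ff: "is_path C' (Ff f)" "fst (Ff f) = Fs (fsrc C f)" "path_end C' (Ff f) = Fs (ftgt C f)"
    using assms(3) peq_pre by (auto simp: catpres_morph_def)
  have e: "(fsrc C f, f # snd p) = pcomp (fsrc C f, [f]) p" "(fsrc C f, f # snd q) = pcomp (fsrc C f, [f]) q"
    by (auto simp: pcomp_def)
  have a1: "apply_path Fs Ff (fsrc C f, [f]) = Ff f" using ff(2)
    by (cases "Ff f") (auto simp: apply_path_def)
  have en: "path_end C' (Ff f) = fst (apply_path Fs Ff p)"
    using ff peq_pre by (auto simp: apply_fst)
  show ?case unfolding e apply_pcomp a1
    by (rule peq_comp[OF assms(2) peq.peq_refl[OF ff(1)] peq_pre.IH en])
qed

lemma sem_morph_pclass:
  assumes "valid_catpres C" "valid_catpres C'" "catpres_morph C C' Fs Ff" "is_path C p"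
  shows "snd (sem_morph C' Fs Ff) (pclass C p) = pclass C' (apply_path Fs Ff p)"
proof -
  have "peq C' (apply_path Fs Ff p) (apply_path Fs Ff (rep (pclass C p)))"
    using morph_peq[OF assms(1-3) rep_pclass[OF assms(1,4)]] .
  then have "pclass C' (apply_path Fs Ff p) = pclass C' (apply_path Fs Ff (rep (pclass C p)))"
    using pclass_eq_iff[OF assms(2)] morph_path[OF assms(1,3,4)] by blast
  then show ?thesis unfolding sem_morph_def by simp
qed

lemma sem_morph_functor:
  assumes "valid_catpres C" "valid_catpres C'" "catpres_morph C C' Fs Ff"
  shows "is_functor (sem C) (sem C') (sem_morph C' Fs Ff)"
  unfolding is_functor_def
proof (intro conjI ballI impI)
  fix ob assume "ob \<in> Ob (sem C)"
  then show "fst (sem_morph C' Fs Ff) ob \<in> Ob (sem C')" using assms(3)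
    by (auto simp: sem_def sem_morph_def catpres_morph_def)
  then have "is_path C (ob, [])" using \<open>ob \<in> Ob (sem C)\<close> by (simp add: sem_def is_path_def)
  then show "snd (sem_morph C' Fs Ff) (Id (sem C) ob) = Id (sem C') (fst (sem_morph C' Fs Ff) ob)"
    using sem_morph_pclass[OF assms] by (simp add: sem_id apply_Nil sem_morph_def)
next
  fix a assume "a \<in> Ar (sem C)"
  then obtain p where p: "is_path C p" "a = pclass C p" by (auto simp: sem_Ar)
  have mp: "is_path C' (apply_path Fs Ff p)" "path_end C' (apply_path Fs Ff p) = Fs (path_end C p)"
    using morph_path[OF assms(1,3) p(1)] by auto
  show "snd (sem_morph C' Fs Ff) a \<in> Ar (sem C')"
    "Dom (sem C') (snd (sem_morph C' Fs Ff) a) = fst (sem_morph C' Fs Ff) (Dom (sem C) a)"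
    "Cod (sem C') (snd (sem_morph C' Fs Ff) a) = fst (sem_morph C' Fs Ff) (Cod (sem C) a)"
    using p mp sem_morph_pclass[OF assms p(1)] sem_simps[OF assms(1) p(1)] sem_simps[OF assms(2) mp(1)]
    by (auto simp: sem_ArI sem_morph_def apply_fst)
next
  fix a b assume ab: "a \<in> Ar (sem C)" "b \<in> Ar (sem C)" "Cod (sem C) a = Dom (sem C) b"
  then obtain p q where p: "is_path C p" "a = pclass C p" and q: "is_path C q" "b = pclass C q"
    by (auto simp: sem_Ar)
  have e: "path_end C p = fst q" using ab p q sem_simps[OF assms(1) p(1)] sem_simps[OF assms(1) q(1)] by simp
  have mp: "is_path C' (apply_path Fs Ff p)" "path_end C' (apply_path Fs Ff p) = Fs (path_end C p)"
    using morph_path[OF assms(1,3) p(1)] by auto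
  have mq: "is_path C' (apply_path Fs Ff q)"
    using morph_path[OF assms(1,3) q(1)] by auto
  have e': "path_end C' (apply_path Fs Ff p) = fst (apply_path Fs Ff q)" using mp e by (simp add: apply_fst)
  show "snd (sem_morph C' Fs Ff) (Comp (sem C) a b) = Comp (sem C') (snd (sem_morph C' Fs Ff) a) (snd (sem_morph C' Fs Ff) b)"
    using p q sem_comp[OF assms(1) p(1) q(1) e] sem_morph_pclass[OF assms is_path_pcomp[OF p(1) q(1) e]]
      sem_morph_pclass[OF assms p(1)] sem_morph_pclass[OF assms q(1)] sem_comp[OF assms(2) mp(1) mq e']
    by (simp add: apply_pcomp)
qed

lemma equiv_peq:
  assumes "valid_catpres C" "valid_catpres C'" "catpres_morph C C' Fs Ff" "catpres_morph C C' Gs Gf"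
    "catpres_equiv C C' Fs Ff Gs Gf" "is_path C p"
  shows "peq C' (apply_path Fs Ff p) (apply_path Gs Gf p)"
proof -
  obtain c fs where p: "p = (c, fs)" by (cases p)
  have "c \<in> Sorts C \<Longrightarrow> is_chain (fsrc C) (ftgt C) (Funs C) c fs \<Longrightarrow>
     peq C' (apply_path Fs Ff (c, fs)) (apply_path Gs Gf (c, fs))"
  proof (induction fs arbitrary: c)
    case Nil
    then show ?case using assms(3,5) by (auto simp: apply_Nil catpres_morph_def catpres_equiv_def
          is_path_def intro!: peq_refl)
  next
    case (Cons f fs)
    have f: "f \<in> Funs C" "fsrc C f = c" using Cons by auto
    have ff: "fst (Ff f) = Fs c" "fst (Gf f) = Gs c"
      using assms(3,4) f by (auto simp: catpres_morph_def)
    have tg: "ftgt C f \<in> Sorts C" using assms(1) f by (auto simp: valid_catpres_def)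
    have eq: "apply_path Fs Ff (c, f # fs) = pcomp (Ff f) (apply_path Fs Ff (ftgt C f, fs))"
      using apply_Cons[of Fs Ff c f fs "ftgt C f"] ff(1) by (cases "Ff f") auto
    have eq2: "apply_path Gs Gf (c, f # fs) = pcomp (Gf f) (apply_path Gs Gf (ftgt C f, fs))"
      using apply_Cons[of Gs Gf c f fs "ftgt C f"] ff(2) by (cases "Gf f") auto
    have e: "path_end C' (Ff f) = fst (apply_path Fs Ff (ftgt C f, fs))"
      using assms(3) f by (simp add: apply_fst catpres_morph_def)
    show ?case unfolding eq eq2 using assms(5) f Cons tg
      by (intro peq_comp[OF assms(2) _ _ e]) (auto simp: catpres_equiv_def)
  qed
  then show ?thesis using assms(6) p by (auto simp: is_path_def)
qed

lemma tot_simps: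
  "Sorts (tot C D P) = Inl ` Sorts C \<union> Inr ` Sorts D"
  "fsrc (tot C D P) (Inl f) = Inl (fsrc C f)"
  "fsrc (tot C D P) (Inr (Inl x)) = Inl (usrc P x)"
  "fsrc (tot C D P) (Inr (Inr g)) = Inr (fsrc D g)"
  "ftgt (tot C D P) (Inl f) = Inl (ftgt C f)"
  "ftgt (tot C D P) (Inr (Inl x)) = Inr (utgt P x)"
  "ftgt (tot C D P) (Inr (Inr g)) = Inr (ftgt D g)"
  "Inl f \<in> Funs (tot C D P) \<longleftrightarrow> f \<in> Funs C"
  "Inr (Inl x) \<in> Funs (tot C D P) \<longleftrightarrow> x \<in> UFuns P"
  "Inr (Inr g) \<in> Funs (tot C D P) \<longleftrightarrow> g \<in> Funs D"
  "Inl c \<in> Sorts (tot C D P) \<longleftrightarrow> c \<in> Sorts C"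
  "Inr d \<in> Sorts (tot C D P) \<longleftrightarrow> d \<in> Sorts D"
  by (auto simp: tot_def)

lemma tot_fun_cases:
  assumes "f \<in> Funs (tot C D P)"
  obtains (C) a where "f = Inl a" "a \<in> Funs C"
    | (P) x where "f = Inr (Inl x)" "x \<in> UFuns P"
    | (D) g where "f = Inr (Inr g)" "g \<in> Funs D"
  using assms by (auto simp: tot_def)

lemma chain_embC:
  "is_chain (fsrc (tot C D P)) (ftgt (tot C D P)) (Funs (tot C D P)) (Inl c) (map Inl fs)
   \<longleftrightarrow> is_chain (fsrc C) (ftgt C) (Funs C) c fs"
  by (induction fs arbitrary: c) (auto simp: tot_simps)

lemma chain_embD:
  "is_chain (fsrc (tot C D P)) (ftgt (tot C D P)) (Funs (tot C D P)) (Inr c) (map (\<lambda>g. Inr (Inr g)) fs)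
   \<longleftrightarrow> is_chain (fsrc D) (ftgt D) (Funs D) c fs"
  by (induction fs arbitrary: c) (auto simp: tot_simps)

lemma embC_simps:
  "is_path (tot C D P) (embC p) \<longleftrightarrow> is_path C p"
  "path_end (tot C D P) (embC p) = Inl (path_end C p)"
  "fst (embC p) = Inl (fst p)"
  "embC (pcomp p q) = pcomp (embC p) (embC q)"
  by (auto simp: embC_def is_path_def chain_embC tot_simps path_end_def last_map pcomp_def)

lemma embD_simps:
  "is_path (tot C D P) (embD p) \<longleftrightarrow> is_path D p"
  "path_end (tot C D P) (embD p) = Inr (path_end D p)"
  "fst (embD p) = Inr (fst p)"
  "embD (pcomp p q) = pcomp (embD p) (embD q)"
  by (auto simp: embD_def is_path_def chain_embD tot_simps path_end_def last_map pcomp_def)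

lemma valid_tot:
  assumes "valid_catpres C" "valid_catpres D" "valid_unc C D P"
  shows "valid_catpres (tot C D P)"
proof -
  have 1: "\<forall>f\<in>Funs (tot C D P). fsrc (tot C D P) f \<in> Sorts (tot C D P) \<and> ftgt (tot C D P) f \<in> Sorts (tot C D P)"
  proof
    fix f assume "f \<in> Funs (tot C D P)"
    then show "fsrc (tot C D P) f \<in> Sorts (tot C D P) \<and> ftgt (tot C D P) f \<in> Sorts (tot C D P)"
      using assms by (cases rule: tot_fun_cases) (auto simp: tot_simps valid_catpres_def valid_unc_def)
  qed
  have 2: "\<forall>(p, q)\<in>Eqs (tot C D P). is_path (tot C D P) p \<and> is_path (tot C D P) q \<and> parallel (tot C D P) p q"
  proof -
    have "Eqs (tot C D P) = (\<lambda>(p, q). (embC p, embC q)) ` Eqs C \<union> UEqs P \<union> (\<lambda>(p, q). (embD p, embD q)) ` Eqs D"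
      by (simp add: tot_def)
    then show ?thesis using assms
      by (auto simp: valid_catpres_def valid_unc_def embC_simps embD_simps parallel_def cross_path_def)
  qed
  show ?thesis using 1 2 by (simp add: valid_catpres_def)
qed

lemma chain_inl:
  "is_chain (fsrc (tot C D P)) (ftgt (tot C D P)) (Funs (tot C D P)) c fs \<Longrightarrow>
   isl (if fs = [] then c else ftgt (tot C D P) (last fs)) \<Longrightarrow>
   isl c \<and> (\<exists>gs. fs = map Inl gs \<and> is_chain (fsrc C) (ftgt C) (Funs C) (projl c) gs)"
proof (induction fs arbitrary: c)
  case Nil
  then show ?case by auto
next
  case (Cons f fs)
  have f: "f \<in> Funs (tot C D P)" "fsrc (tot C D P) f = c" using Cons.prems by auto
  have IH: "isl (ftgt (tot C D P) f) \<and> (\<exists>gs. fs = map Inl gs \<and> is_chain (fsrc C) (ftgt C) (Funs C) (projl (ftgt (tot C D P) f)) gs)"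
    using Cons.IH[of "ftgt (tot C D P) f"] Cons.prems by (auto split: if_splits)
  from f(1) show ?case
  proof (cases rule: tot_fun_cases)
    case (C a)
    then obtain gs where "fs = map Inl gs \<and> is_chain (fsrc C) (ftgt C) (Funs C) (ftgt C a) gs"
      using IH by (auto simp: tot_simps)
    then show ?thesis using C f by (auto simp: tot_simps intro!: exI[of _ "a # gs"])
  next
    case (P x)
    then show ?thesis using IH by (auto simp: tot_simps)
  next
    case (D g)
    then show ?thesis using IH by (auto simp: tot_simps)
  qed
qed

lemma path_inl:
  assumes "is_path (tot C D P) p" "isl (path_end (tot C D P) p)"
  shows "\<exists>r. is_path C r \<and> p = embC r"
proof -
  obtain c fs where p: "p = (c, fs)" by (cases p)
  have ch: "is_chain (fsrc (tot C D P)) (ftgt (tot C D P)) (Funs (tot C D P)) c fs" "c \<in> Sorts (tot C D P)"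
    using assms p by (auto simp: is_path_def)
  have "isl (if fs = [] then c else ftgt (tot C D P) (last fs))" using assms(2) unfolding p path_end_def by (cases "fs = []") auto
  from chain_inl[OF ch(1) this] obtain gs where g: "isl c" "fs = map Inl gs"
     "is_chain (fsrc C) (ftgt C) (Funs C) (projl c) gs"
    by (auto simp: path_end_def)
  have "projl c \<in> Sorts C" using g(1) ch(2) by (cases c) (auto simp: tot_simps)
  then show ?thesis using g p by (intro exI[of _ "(projl c, gs)"]) (auto simp: is_path_def embC_def)
qed

lemma chain_inr:
  "is_chain (fsrc (tot C D P)) (ftgt (tot C D P)) (Funs (tot C D P)) c fs \<Longrightarrow> \<not> isl c \<Longrightarrow>
   (\<exists>gs. fs = map (\<lambda>g. Inr (Inr g)) gs \<and> is_chain (fsrc D) (ftgt D) (Funs D) (projr c) gs)"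
proof (induction fs arbitrary: c)
  case Nil
  then show ?case by auto
next
  case (Cons f fs)
  have f: "f \<in> Funs (tot C D P)" "fsrc (tot C D P) f = c" using Cons.prems by auto
  from f(1) show ?case
  proof (cases rule: tot_fun_cases)
    case (C a)
    then show ?thesis using f Cons.prems by (auto simp: tot_simps)
  next
    case (P x)
    then show ?thesis using f Cons.prems by (auto simp: tot_simps)
  next
    case (D g)
    then obtain gs where "fs = map (\<lambda>g. Inr (Inr g)) gs \<and> is_chain (fsrc D) (ftgt D) (Funs D) (ftgt D g) gs"
      using Cons.IH[of "ftgt (tot C D P) f"] Cons.prems by (auto simp: tot_simps)
    then show ?thesis using D f by (auto simp: tot_simps intro!: exI[of _ "g # gs"])
  qed
qed

lemma path_inr:
  assumes "is_path (tot C D P) p" "\<not> isl (fst p)"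
  shows "\<exists>r. is_path D r \<and> p = embD r"
proof -
  obtain c fs where p: "p = (c, fs)" by (cases p)
  have ch: "is_chain (fsrc (tot C D P)) (ftgt (tot C D P)) (Funs (tot C D P)) c fs" "c \<in> Sorts (tot C D P)"
    using assms p by (auto simp: is_path_def)
  from chain_inr[OF ch(1)] assms(2) p obtain gs where g: "fs = map (\<lambda>g. Inr (Inr g)) gs"
     "is_chain (fsrc D) (ftgt D) (Funs D) (projr c) gs"
    by auto
  have "projr c \<in> Sorts D" "c = Inr (projr c)" using assms(2) p ch(2) by (cases c; auto simp: tot_simps)+
  then show ?thesis using g p by (intro exI[of _ "(projr c, gs)"]) (auto simp: is_path_def embD_def)
qed

lemma embC_peq:
  fixes C :: "('a, 'b) catpres" and D :: "('c, 'e) catpres" and P :: "('a, 'c, 'b, 'e, 'd) uncpres"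
  assumes "valid_catpres C"
  shows "peq C p q \<Longrightarrow> peq (tot C D P) (embC p) (embC q)"
proof (induction rule: peq.induct)
  case (peq_ax p q)
  then show ?case by (intro peq.peq_ax) (force simp: tot_def)
next
  case (peq_refl p)
  then show ?case by (intro peq.peq_refl) (simp add: embC_simps)
next
  case (peq_sym p q)
  show ?case using peq_sym.IH by (rule peq.peq_sym)
next
  case (peq_trans p q r)
  show ?case using peq_trans.IH by (rule peq.peq_trans)
next
  case (peq_post p q f)
  have "peq (tot C D P) (fst (embC p :: ('a + 'c) \<times> ('b + 'd + 'e) list), snd (embC p :: ('a + 'c) \<times> ('b + 'd + 'e) list) @ [Inl f])
       (fst (embC q :: ('a + 'c) \<times> ('b + 'd + 'e) list), snd (embC q :: ('a + 'c) \<times> ('b + 'd + 'e) list) @ [Inl f])"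
    using peq_post by (intro peq.peq_post[OF peq_post.IH]) (auto simp: tot_simps embC_simps)
  then show ?case by (simp add: embC_def)
next
  case (peq_pre p q f)
  have "peq (tot C D P) (fsrc (tot C D P) (Inl f), Inl f # snd (embC p :: ('a + 'c) \<times> ('b + 'd + 'e) list))
     (fsrc (tot C D P) (Inl f), Inl f # snd (embC q :: ('a + 'c) \<times> ('b + 'd + 'e) list))"
    using peq_pre by (intro peq.peq_pre[OF peq_pre.IH]) (auto simp: tot_simps embC_simps)
  then show ?case by (simp add: embC_def tot_simps)
qed

lemma embD_peq:
  fixes C :: "('c, 'd) catpres" and D :: "('a, 'b) catpres" and P :: "('c, 'a, 'd, 'b, 'e) uncpres"
  assumes "valid_catpres D"
  shows "peq D p q \<Longrightarrow> peq (tot C D P) (embD p) (embD q)"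
proof (induction rule: peq.induct)
  case (peq_ax p q)
  then show ?case by (intro peq.peq_ax) (force simp: tot_def)
next
  case (peq_refl p)
  then show ?case by (intro peq.peq_refl) (simp add: embD_simps)
next
  case (peq_sym p q)
  show ?case using peq_sym.IH by (rule peq.peq_sym)
next
  case (peq_trans p q r)
  show ?case using peq_trans.IH by (rule peq.peq_trans)
next
  case (peq_post p q f)
  have "peq (tot C D P) (fst (embD p :: ('c + 'a) \<times> ('d + 'e + 'b) list), snd (embD p :: ('c + 'a) \<times> ('d + 'e + 'b) list) @ [Inr (Inr f)])
     (fst (embD q :: ('c + 'a) \<times> ('d + 'e + 'b) list), snd (embD q :: ('c + 'a) \<times> ('d + 'e + 'b) list) @ [Inr (Inr f)])"
    using peq_post by (intro peq.peq_post[OF peq_post.IH]) (auto simp: tot_simps embD_simps)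
  then show ?case by (simp add: embD_def)
next
  case (peq_pre p q f)
  have "peq (tot C D P) (fsrc (tot C D P) (Inr (Inr f)), Inr (Inr f) # snd (embD p :: ('c + 'a) \<times> ('d + 'e + 'b) list))
     (fsrc (tot C D P) (Inr (Inr f)), Inr (Inr f) # snd (embD q :: ('c + 'a) \<times> ('d + 'e + 'b) list))"
    using peq_pre by (intro peq.peq_pre[OF peq_pre.IH]) (auto simp: tot_simps embD_simps)
  then show ?case by (simp add: embD_def tot_simps)
qed

definition unC :: "('c + 'd) \<times> ('cf + 'y) list \<Rightarrow> 'c \<times> 'cf list" where
  "unC p = (projl (fst p), map projl (snd p))"

definition unD :: "('c + 'd) \<times> ('cf + 'x + 'df) list \<Rightarrow> 'd \<times> 'df list" where
  "unD p = (projr (fst p), map (\<lambda>g. projr (projr g)) (snd p))"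

lemma unC_embC: "unC (embC r) = r"
  by (simp add: unC_def embC_def comp_def)

lemma unD_embD: "unD (embD r) = r"
  by (simp add: unD_def embD_def comp_def)

lemma path_end_Cons_tot: "ftgt C f = fst p \<Longrightarrow> path_end C (fsrc C f, f # snd p) = path_end C p"
  by (auto simp: path_end_def)

lemma conservC:
  fixes C :: "('c, 'cf) catpres" and D :: "('d, 'df) catpres" and P :: "('c, 'd, 'cf, 'df, 'x) uncpres"
  assumes vC: "valid_catpres C" and vD: "valid_catpres D" and vP: "valid_unc C D P"
  shows "peq (tot C D P) p q \<Longrightarrow> isl (path_end (tot C D P) p) \<Longrightarrow> peq C (unC p) (unC q)"
proof (induction rule: peq.induct)
  case (peq_ax p q)
  have "(p, q) \<in> (\<lambda>(p, q). (embC p, embC q)) ` Eqs C \<union> UEqs P \<union> (\<lambda>(p, q). (embD p, embD q)) ` Eqs D"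
    using peq_ax(1) by (simp add: tot_def)
  then show ?case using peq_ax(2) vP
    by (auto simp: unC_embC embD_simps cross_path_def valid_unc_def intro: peq.peq_ax)
next
  case (peq_refl p)
  then obtain r where "is_path C r" "p = embC r" using path_inl by blast
  then show ?case by (simp add: unC_embC peq.peq_refl)
next
  case (peq_sym p q)
  then show ?case using peq_props[OF valid_tot[OF vC vD vP] peq_sym.hyps] by (auto intro: peq.peq_sym)
next
  case (peq_trans p q r)
  then show ?case using peq_props[OF valid_tot[OF vC vD vP] peq_trans.hyps(1)] by (auto intro: peq.peq_trans)
next
  case (peq_post p q f)
  have pp: "is_path (tot C D P) p" "is_path (tot C D P) q" "path_end (tot C D P) p = path_end (tot C D P) q"
    using peq_props[OF valid_tot[OF vC vD vP] peq_post.hyps(1)] by auto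
  from peq_post.hyps(2) show ?case
  proof (cases rule: tot_fun_cases)
    case (C a)
    have "path_end (tot C D P) p = Inl (fsrc C a)" using C peq_post.hyps(3) by (simp add: tot_simps)
    then have isl: "isl (path_end (tot C D P) p)" by simp
    obtain r where r: "is_path C r" "p = embC r" using path_inl[OF pp(1) isl] by blast
    obtain r' where r': "is_path C r'" "q = embC r'" using path_inl[OF pp(2)] isl pp(3) by metis
    have "peq C (fst r, snd r @ [a]) (fst r', snd r' @ [a])"
      using peq_post.IH[OF isl] r r' C peq_post.hyps(3)
      by (intro peq.peq_post) (auto simp: unC_embC tot_simps embC_simps)
    then show ?thesis using r r' C by (simp add: unC_def embC_def comp_def)
  next
    case (P x)
    then show ?thesis using peq_post.prems by (simp add: path_end_def tot_simps)
  next
    case (D g)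
    then show ?thesis using peq_post.prems by (simp add: path_end_def tot_simps)
  qed
next
  case (peq_pre p q f)
  have pp: "is_path (tot C D P) p" "is_path (tot C D P) q" "path_end (tot C D P) p = path_end (tot C D P) q"
    "fst p = fst q"
    using peq_props[OF valid_tot[OF vC vD vP] peq_pre.hyps(1)] by auto
  have isl: "isl (path_end (tot C D P) p)" using peq_pre.prems path_end_Cons_tot[OF peq_pre.hyps(3)] by simp
  obtain r where r: "is_path C r" "p = embC r" using path_inl[OF pp(1) isl] by blast
  obtain r' where r': "is_path C r'" "q = embC r'" using path_inl[OF pp(2)] isl pp(3) by metis
  from peq_pre.hyps(2) show ?case
  proof (cases rule: tot_fun_cases)
    case (C a)
    have "peq C (fsrc C a, a # snd r) (fsrc C a, a # snd r')"
      using peq_pre.IH[OF isl] r r' C peq_pre.hyps(3)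
      by (intro peq.peq_pre) (auto simp: unC_embC tot_simps embC_simps)
    then show ?thesis using r r' C by (simp add: unC_def embC_def comp_def tot_simps)
  next
    case (P x)
    then show ?thesis using peq_pre.hyps(3) r by (simp add: tot_simps embC_simps)
  next
    case (D g)
    then show ?thesis using peq_pre.hyps(3) r by (simp add: tot_simps embC_simps)
  qed
qed

lemma conservD:
  fixes C :: "('c, 'cf) catpres" and D :: "('d, 'df) catpres" and P :: "('c, 'd, 'cf, 'df, 'x) uncpres"
  assumes vC: "valid_catpres C" and vD: "valid_catpres D" and vP: "valid_unc C D P"
  shows "peq (tot C D P) p q \<Longrightarrow> \<not> isl (fst p) \<Longrightarrow> peq D (unD p) (unD q)"
proof (induction rule: peq.induct)
  case (peq_ax p q)
  have "(p, q) \<in> (\<lambda>(p, q). (embC p, embC q)) ` Eqs C \<union> UEqs P \<union> (\<lambda>(p, q). (embD p, embD q)) ` Eqs D"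
    using peq_ax(1) by (simp add: tot_def)
  then show ?case using peq_ax(2) vP
    by (auto simp: unD_embD embC_simps cross_path_def valid_unc_def intro: peq.peq_ax)
next
  case (peq_refl p)
  then obtain r where "is_path D r" "p = embD r" using path_inr by blast
  then show ?case by (simp add: unD_embD peq.peq_refl)
next
  case (peq_sym p q)
  then show ?case using peq_props[OF valid_tot[OF vC vD vP] peq_sym.hyps] by (auto intro: peq.peq_sym)
next
  case (peq_trans p q r)
  then show ?case using peq_props[OF valid_tot[OF vC vD vP] peq_trans.hyps(1)] by (auto intro: peq.peq_trans)
next
  case (peq_post p q f)
  have pp: "is_path (tot C D P) p" "is_path (tot C D P) q" "path_end (tot C D P) p = path_end (tot C D P) q"
    "fst p = fst q"
    using peq_props[OF valid_tot[OF vC vD vP] peq_post.hyps(1)] by auto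
  have nisl: "\<not> isl (fst p)" using peq_post.prems by simp
  obtain r where r: "is_path D r" "p = embD r" using path_inr[OF pp(1) nisl] by blast
  obtain r' where r': "is_path D r'" "q = embD r'" using path_inr[OF pp(2)] nisl pp(4) by metis
  from peq_post.hyps(2) show ?case
  proof (cases rule: tot_fun_cases)
    case (D g)
    have "peq D (fst r, snd r @ [g]) (fst r', snd r' @ [g])"
      using peq_post.IH[OF nisl] r r' D peq_post.hyps(3)
      by (intro peq.peq_post) (auto simp: unD_embD tot_simps embD_simps)
    then show ?thesis using r r' D by (simp add: unD_def embD_def comp_def)
  next
    case (P x)
    then show ?thesis using peq_post.hyps(3) r by (simp add: tot_simps embD_simps)
  next
    case (C a)
    then show ?thesis using peq_post.hyps(3) r by (simp add: tot_simps embD_simps)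
  qed
next
  case (peq_pre p q f)
  have pp: "is_path (tot C D P) p" "is_path (tot C D P) q" "fst p = fst q"
    using peq_props[OF valid_tot[OF vC vD vP] peq_pre.hyps(1)] by auto
  from peq_pre.hyps(2) show ?case
  proof (cases rule: tot_fun_cases)
    case (D g)
    have "fst p = Inr (ftgt D g)" using peq_pre.hyps(3) D by (simp add: tot_simps)
    then have nisl: "\<not> isl (fst p)" by simp
    obtain r where r: "is_path D r" "p = embD r" using path_inr[OF pp(1) nisl] by blast
    obtain r' where r': "is_path D r'" "q = embD r'" using path_inr[OF pp(2)] nisl pp(3) by metis
    have "peq D (fsrc D g, g # snd r) (fsrc D g, g # snd r')"
      using peq_pre.IH[OF nisl] r r' D peq_pre.hyps(3)
      by (intro peq.peq_pre) (auto simp: unD_embD tot_simps embD_simps)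
    then show ?thesis using r r' D by (simp add: unD_def embD_def comp_def tot_simps)
  next
    case (P x)
    then show ?thesis using peq_pre.prems by (simp add: tot_simps)
  next
    case (C a)
    then show ?thesis using peq_pre.prems by (simp add: tot_simps)
  qed
qed

lemma conservC':
  fixes C :: "('c, 'cf) catpres" and D :: "('d, 'df) catpres" and P :: "('c, 'd, 'cf, 'df, 'x) uncpres"
  assumes "valid_catpres C" "valid_catpres D" "valid_unc C D P"
  shows "peq (tot C D P) (embC p) (embC q) \<longleftrightarrow> peq C p q"
  using conservC[OF assms, of "embC p" "embC q"] embC_peq[OF assms(1), of p q D P] by (auto simp: unC_embC embC_simps)

lemma conservD':
  fixes C :: "('c, 'cf) catpres" and D :: "('d, 'df) catpres" and P :: "('c, 'd, 'cf, 'df, 'x) uncpres"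
  assumes "valid_catpres C" "valid_catpres D" "valid_unc C D P"
  shows "peq (tot C D P) (embD p) (embD q) \<longleftrightarrow> peq D p q"
  using conservD[OF assms, of "embD p" "embD q"] embD_peq[OF assms(2), of p q C P] by (auto simp: unD_embD embD_simps)

definition embCf :: "('c, 'cf) catpres \<Rightarrow> 'cf \<Rightarrow> ('c + 'd) \<times> ('cf + 'x + 'df) list" where
  "embCf C f = (Inl (fsrc C f), [Inl f])"

definition embDf :: "('d, 'df) catpres \<Rightarrow> 'df \<Rightarrow> ('c + 'd) \<times> ('cf + 'x + 'df) list" where
  "embDf D g = (Inr (fsrc D g), [Inr (Inr g)])"

lemma apply_embCf: "apply_path Inl (embCf C) r = embC r"
  by (simp add: apply_path_def embCf_def embC_def map_concat concat_map_singleton comp_def)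

lemma apply_embDf: "apply_path Inr (embDf D) r = embD r"
  by (simp add: apply_path_def embDf_def embD_def map_concat concat_map_singleton comp_def)

lemma morph_embCf:
  fixes C :: "('c, 'cf) catpres" and D :: "('d, 'df) catpres" and P :: "('c, 'd, 'cf, 'df, 'x) uncpres"
  assumes "valid_catpres C"
  shows "catpres_morph C (tot C D P) Inl (embCf C)"
proof -
  have 1: "\<forall>f\<in>Funs C. is_path (tot C D P) (embCf C f) \<and> fst (embCf C f) = Inl (fsrc C f) \<and>
     path_end (tot C D P) (embCf C f) = Inl (ftgt C f)"
    using assms by (auto simp: embCf_def is_path_def tot_simps path_end_def valid_catpres_def)
  have 2: "\<forall>(p, q)\<in>Eqs C. peq (tot C D P) (apply_path Inl (embCf C) p) (apply_path Inl (embCf C) q)"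
  proof (intro ballI, clarify)
    fix p q assume "(p, q) \<in> Eqs C"
    then show "peq (tot C D P) (apply_path Inl (embCf C) p) (apply_path Inl (embCf C) q)"
      unfolding apply_embCf by (intro peq_ax) (force simp: tot_def)
  qed
  show ?thesis using 1 2 unfolding catpres_morph_def by (simp add: tot_simps)
qed

lemma morph_embDf:
  fixes C :: "('c, 'cf) catpres" and D :: "('d, 'df) catpres" and P :: "('c, 'd, 'cf, 'df, 'x) uncpres"
  assumes "valid_catpres D"
  shows "catpres_morph D (tot C D P) Inr (embDf D)"
proof -
  have 1: "\<forall>f\<in>Funs D. is_path (tot C D P) (embDf D f) \<and> fst (embDf D f) = Inr (fsrc D f) \<and>
     path_end (tot C D P) (embDf D f) = Inr (ftgt D f)"
    using assms by (auto simp: embDf_def is_path_def tot_simps path_end_def valid_catpres_def)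
  have 2: "\<forall>(p, q)\<in>Eqs D. peq (tot C D P) (apply_path Inr (embDf D) p) (apply_path Inr (embDf D) q)"
  proof (intro ballI, clarify)
    fix p q assume "(p, q) \<in> Eqs D"
    then show "peq (tot C D P) (apply_path Inr (embDf D) p) (apply_path Inr (embDf D) q)"
      unfolding apply_embDf by (intro peq_ax) (force simp: tot_def)
  qed
  show ?thesis using 1 2 unfolding catpres_morph_def by (simp add: tot_simps)
qed

lemma in0_eq:
  "(in0_ob (sem_unc C D P), in0_ar (sem_unc C D P)) = sem_morph (tot C D P) Inl (embCf C)"
  by (simp add: sem_unc_def sem_morph_def apply_embCf fun_eq_iff)

lemma in1_eq:
  "(in1_ob (sem_unc C D P), in1_ar (sem_unc C D P)) = sem_morph (tot C D P) Inr (embDf D)"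
  by (simp add: sem_unc_def sem_morph_def apply_embDf fun_eq_iff)

lemma in0_pclass:
  fixes C :: "('c, 'cf) catpres" and D :: "('d, 'df) catpres" and P :: "('c, 'd, 'cf, 'df, 'x) uncpres"
  assumes "valid_catpres C" "valid_catpres D" "valid_unc C D P" "is_path C r"
  shows "in0_ar (sem_unc C D P) (pclass C r) = pclass (tot C D P) (embC r)"
  using sem_morph_pclass[OF assms(1) valid_tot[OF assms(1-3)] morph_embCf[OF assms(1)] assms(4)]
    in0_eq[of C D P] by (metis apply_embCf snd_conv)

lemma in1_pclass:
  fixes C :: "('c, 'cf) catpres" and D :: "('d, 'df) catpres" and P :: "('c, 'd, 'cf, 'df, 'x) uncpres"
  assumes "valid_catpres C" "valid_catpres D" "valid_unc C D P" "is_path D r"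
  shows "in1_ar (sem_unc C D P) (pclass D r) = pclass (tot C D P) (embD r)"
  using sem_morph_pclass[OF assms(2) valid_tot[OF assms(1-3)] morph_embDf[OF assms(2)] assms(4)]
    in1_eq[of C D P] by (metis apply_embDf snd_conv)

lemma sem_unc_simps:
  "pcat (sem_unc C D P) = sem (tot C D P)"
  "pi_ob (sem_unc C D P) = (\<lambda>s. \<not> isl s)"
  "pi_ar (sem_unc C D P) = (\<lambda>X. (\<not> isl (Dom (sem (tot C D P)) X), \<not> isl (Cod (sem (tot C D P)) X)))"
  "in0_ob (sem_unc C D P) = Inl"
  "in1_ob (sem_unc C D P) = Inr"
  by (simp_all add: sem_unc_def)

lemma cat_comp_dc:
  assumes "is_category K" "a \<in> Ar K" "b \<in> Ar K" "Cod K a = Dom K b"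
  shows "Comp K a b \<in> Ar K" "Dom K (Comp K a b) = Dom K a" "Cod K (Comp K a b) = Cod K b"
  using assms unfolding is_category_def by blast+

lemma part_A:
  fixes C :: "('c, 'cf) catpres" and D :: "('d, 'df) catpres" and P :: "('c, 'd, 'cf, 'df, 'x) uncpres"
  assumes vC: "valid_catpres C" and vD: "valid_catpres D" and vP: "valid_unc C D P"
  shows "is_profunctor (sem C) (sem D) (sem_unc C D P)"
proof -
  let ?T = "tot C D P"
  have vT: "valid_catpres ?T" using valid_tot[OF vC vD vP] .
  have catT: "is_category (sem ?T)" using sem_category[OF vT] .
  have pi: "is_functor (sem ?T) cat_two (pi_ob (sem_unc C D P), pi_ar (sem_unc C D P))"
    unfolding is_functor_def sem_unc_simps
  proof (intro conjI ballI impI)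
    fix ob assume "ob \<in> Ob (sem ?T)"
    show "fst (\<lambda>s. \<not> isl s, \<lambda>X. (\<not> isl (Dom (sem ?T) X), \<not> isl (Cod (sem ?T) X))) ob \<in> Ob cat_two"
      by (simp add: cat_two_def)
    from \<open>ob \<in> Ob (sem ?T)\<close> have "is_path ?T (ob, [])" by (simp add: sem_def is_path_def)
    then show "snd (\<lambda>s. \<not> isl s, \<lambda>X. (\<not> isl (Dom (sem ?T) X), \<not> isl (Cod (sem ?T) X))) (Id (sem ?T) ob) =
       Id cat_two (fst (\<lambda>s. \<not> isl s, \<lambda>X. (\<not> isl (Dom (sem ?T) X), \<not> isl (Cod (sem ?T) X))) ob)"
      using sem_simps[OF vT] by (simp add: sem_id cat_two_def path_end_def)
  next
    fix a assume "a \<in> Ar (sem ?T)"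
    then obtain p where p: "is_path ?T p" "a = pclass ?T p" by (auto simp: sem_Ar)
    have "\<not> isl (path_end ?T p)" if nisl: "\<not> isl (fst p)"
    proof -
      obtain r where "p = embD r" using path_inr[OF p(1) nisl] by blast
      then show ?thesis by (simp add: embD_simps)
    qed
    then show "snd (\<lambda>s. \<not> isl s, \<lambda>X. (\<not> isl (Dom (sem ?T) X), \<not> isl (Cod (sem ?T) X))) a \<in> Ar cat_two"
      using p sem_simps[OF vT p(1)] by (auto simp: cat_two_def)
    show "Dom cat_two (snd (\<lambda>s. \<not> isl s, \<lambda>X. (\<not> isl (Dom (sem ?T) X), \<not> isl (Cod (sem ?T) X))) a) =
       fst (\<lambda>s. \<not> isl s, \<lambda>X. (\<not> isl (Dom (sem ?T) X), \<not> isl (Cod (sem ?T) X))) (Dom (sem ?T) a)"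
      "Cod cat_two (snd (\<lambda>s. \<not> isl s, \<lambda>X. (\<not> isl (Dom (sem ?T) X), \<not> isl (Cod (sem ?T) X))) a) =
       fst (\<lambda>s. \<not> isl s, \<lambda>X. (\<not> isl (Dom (sem ?T) X), \<not> isl (Cod (sem ?T) X))) (Cod (sem ?T) a)"
      by (simp_all add: cat_two_def)
  next
    fix a b assume ab: "a \<in> Ar (sem ?T)" "b \<in> Ar (sem ?T)" "Cod (sem ?T) a = Dom (sem ?T) b"
    then show "snd (\<lambda>s. \<not> isl s, \<lambda>X. (\<not> isl (Dom (sem ?T) X), \<not> isl (Cod (sem ?T) X))) (Comp (sem ?T) a b) =
       Comp cat_two (snd (\<lambda>s. \<not> isl s, \<lambda>X. (\<not> isl (Dom (sem ?T) X), \<not> isl (Cod (sem ?T) X))) a)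
        (snd (\<lambda>s. \<not> isl s, \<lambda>X. (\<not> isl (Dom (sem ?T) X), \<not> isl (Cod (sem ?T) X))) b)"
      using cat_comp_dc[OF catT ab] by (simp add: cat_two_def)
  qed
  have f0: "is_functor (sem C) (sem ?T) (in0_ob (sem_unc C D P), in0_ar (sem_unc C D P))"
    unfolding in0_eq by (rule sem_morph_functor[OF vC vT morph_embCf[OF vC]])
  have f1: "is_functor (sem D) (sem ?T) (in1_ob (sem_unc C D P), in1_ar (sem_unc C D P))"
    unfolding in1_eq by (rule sem_morph_functor[OF vD vT morph_embDf[OF vD]])
  have inj0: "inj_on (in0_ar (sem_unc C D P)) (Ar (sem C))"
  proof (rule inj_onI)
    fix x y assume xy: "x \<in> Ar (sem C)" "y \<in> Ar (sem C)" "in0_ar (sem_unc C D P) x = in0_ar (sem_unc C D P) y"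
    then obtain p q where p: "is_path C p" "x = pclass C p" and q: "is_path C q" "y = pclass C q"
      by (auto simp: sem_Ar)
    have "pclass ?T (embC p) = pclass ?T (embC q)"
      using xy p q in0_pclass[OF vC vD vP] by metis
    then have "peq ?T (embC p) (embC q)" using pclass_eq_iff[OF vT] p embC_simps by metis
    then have "peq C p q" using conservC'[OF vC vD vP] by blast
    then show "x = y" using p q pclass_eq_iff[OF vC] by metis
  qed
  have inj1: "inj_on (in1_ar (sem_unc C D P)) (Ar (sem D))"
  proof (rule inj_onI)
    fix x y assume xy: "x \<in> Ar (sem D)" "y \<in> Ar (sem D)" "in1_ar (sem_unc C D P) x = in1_ar (sem_unc C D P) y"
    then obtain p q where p: "is_path D p" "x = pclass D p" and q: "is_path D q" "y = pclass D q"
      by (auto simp: sem_Ar)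
    have "pclass ?T (embD p) = pclass ?T (embD q)"
      using xy p q in1_pclass[OF vC vD vP] by metis
    then have "peq ?T (embD p) (embD q)" using pclass_eq_iff[OF vT] p embD_simps by metis
    then have "peq D p q" using conservD'[OF vC vD vP] by blast
    then show "x = y" using p q pclass_eq_iff[OF vD] by metis
  qed
  have im0: "in0_ar (sem_unc C D P) ` Ar (sem C) = {a \<in> Ar (sem ?T). pi_ar (sem_unc C D P) a = (False, False)}"
  proof (intro equalityI subsetI)
    fix a assume "a \<in> in0_ar (sem_unc C D P) ` Ar (sem C)"
    then obtain r where r: "is_path C r" "a = pclass ?T (embC r)"
      using in0_pclass[OF vC vD vP] by (auto simp: sem_Ar)
    have rr: "is_path ?T (embC r)" using r embC_simps by metis
    show "a \<in> {a \<in> Ar (sem ?T). pi_ar (sem_unc C D P) a = (False, False)}"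
      using r rr sem_simps[OF vT rr] sem_ArI[OF rr] by (simp add: sem_unc_simps embC_simps)
  next
    fix a assume a: "a \<in> {a \<in> Ar (sem ?T). pi_ar (sem_unc C D P) a = (False, False)}"
    then obtain p where p: "is_path ?T p" "a = pclass ?T p" by (auto simp: sem_Ar)
    have "isl (path_end ?T p)" using a p sem_simps[OF vT p(1)] by (simp add: sem_unc_simps)
    then obtain r where r: "is_path C r" "p = embC r" using path_inl[OF p(1)] by blast
    then show "a \<in> in0_ar (sem_unc C D P) ` Ar (sem C)"
      using p in0_pclass[OF vC vD vP r(1)] sem_ArI[OF r(1)] by (metis image_eqI)
  qed
  have im1: "in1_ar (sem_unc C D P) ` Ar (sem D) = {a \<in> Ar (sem ?T). pi_ar (sem_unc C D P) a = (True, True)}"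
  proof (intro equalityI subsetI)
    fix a assume "a \<in> in1_ar (sem_unc C D P) ` Ar (sem D)"
    then obtain r where r: "is_path D r" "a = pclass ?T (embD r)"
      using in1_pclass[OF vC vD vP] by (auto simp: sem_Ar)
    have rr: "is_path ?T (embD r)" using r embD_simps by metis
    show "a \<in> {a \<in> Ar (sem ?T). pi_ar (sem_unc C D P) a = (True, True)}"
      using r rr sem_simps[OF vT rr] sem_ArI[OF rr] by (simp add: sem_unc_simps embD_simps)
  next
    fix a assume a: "a \<in> {a \<in> Ar (sem ?T). pi_ar (sem_unc C D P) a = (True, True)}"
    then obtain p where p: "is_path ?T p" "a = pclass ?T p" by (auto simp: sem_Ar)
    have "\<not> isl (fst p)" using a p sem_simps[OF vT p(1)] by (simp add: sem_unc_simps)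
    then obtain r where r: "is_path D r" "p = embD r" using path_inr[OF p(1)] by blast
    then show "a \<in> in1_ar (sem_unc C D P) ` Ar (sem D)"
      using p in1_pclass[OF vC vD vP r(1)] sem_ArI[OF r(1)] by (metis image_eqI)
  qed
  have ob0: "Ob (sem C) = Sorts C" "Ob (sem D) = Sorts D" "Ob (sem ?T) = Sorts ?T" by (simp_all add: sem_def)
  have obs0: "in0_ob (sem_unc C D P) ` Ob (sem C) = {ob \<in> Ob (sem ?T). pi_ob (sem_unc C D P) ob = False}"
    unfolding sem_unc_simps ob0 tot_simps by auto
  have obs1: "in1_ob (sem_unc C D P) ` Ob (sem D) = {ob \<in> Ob (sem ?T). pi_ob (sem_unc C D P) ob = True}"
    unfolding sem_unc_simps ob0 tot_simps by auto
  have inj: "inj_on (in0_ob (sem_unc C D P)) (Ob (sem C))" "inj_on (in1_ob (sem_unc C D P)) (Ob (sem D))"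
    unfolding sem_unc_simps by (simp_all add: inj_on_def)
  show ?thesis unfolding is_profunctor_def sem_unc_simps(1)
    using sem_category[OF vC] sem_category[OF vD] catT pi f0 f1 inj0 inj1 im0 im1 obs0 obs1 inj
    unfolding sem_unc_simps(1) by blast
qed

lemma apply_totF_embC: "apply_path (\<lambda>s. s) (totF C D F) (embC r) = embC r"
  by (simp add: apply_path_def totF_def embC_def comp_def map_concat concat_map_singleton)

lemma apply_totF_embD: "apply_path (\<lambda>s. s) (totF C D F) (embD r) = embD r"
  by (simp add: apply_path_def totF_def embD_def comp_def map_concat concat_map_singleton)

lemma sem_unc_morph_eq: "sem_unc_morph C D P' F = sem_morph (tot C D P') (\<lambda>s. s) (totF C D F)"
  by (simp add: sem_unc_morph_def)

lemma sem_unc_morph_pclass: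
  fixes C :: "('c, 'cf) catpres" and D :: "('d, 'df) catpres"
    and P :: "('c, 'd, 'cf, 'df, 'x) uncpres" and P' :: "('c, 'd, 'cf, 'df, 'y) uncpres"
  assumes vC: "valid_catpres C" and vD: "valid_catpres D" and vP: "valid_unc C D P" and vP': "valid_unc C D P'"
    and M: "unc_morph C D P P' F" and p: "is_path (tot C D P) p"
  shows "snd (sem_unc_morph C D P' F) (pclass (tot C D P) p) = pclass (tot C D P') (apply_path (\<lambda>s. s) (totF C D F) p)"
    "is_path (tot C D P') (apply_path (\<lambda>s. s) (totF C D F) p)"
    "path_end (tot C D P') (apply_path (\<lambda>s. s) (totF C D F) p) = path_end (tot C D P) p"
proof -
  have cm: "catpres_morph (tot C D P) (tot C D P') (\<lambda>s. s) (totF C D F)" using M by (simp add: unc_morph_def)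
  show "snd (sem_unc_morph C D P' F) (pclass (tot C D P) p) = pclass (tot C D P') (apply_path (\<lambda>s. s) (totF C D F) p)"
    using sem_morph_pclass[OF valid_tot[OF vC vD vP] valid_tot[OF vC vD vP'] cm p]
    by (simp add: sem_unc_morph_def)
  show "is_path (tot C D P') (apply_path (\<lambda>s. s) (totF C D F) p)"
    "path_end (tot C D P') (apply_path (\<lambda>s. s) (totF C D F) p) = path_end (tot C D P) p"
    using morph_path[OF valid_tot[OF vC vD vP] cm p] by auto
qed

lemma part_B:
  fixes C :: "('c, 'cf) catpres" and D :: "('d, 'df) catpres"
    and P :: "('c, 'd, 'cf, 'df, 'x) uncpres" and P' :: "('c, 'd, 'cf, 'df, 'y) uncpres"
  assumes vC: "valid_catpres C" and vD: "valid_catpres D" and vP: "valid_unc C D P" and vP': "valid_unc C D P'"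
    and M: "unc_morph C D P P' F"
  shows "prof_morph (sem C) (sem D) (sem_unc C D P) (sem_unc C D P') (sem_unc_morph C D P' F)"
proof -
  let ?T = "tot C D P" and ?T' = "tot C D P'"
  have vT: "valid_catpres ?T" and vT': "valid_catpres ?T'" using valid_tot vC vD vP vP' by blast+
  have cm: "catpres_morph ?T ?T' (\<lambda>s. s) (totF C D F)" using M by (simp add: unc_morph_def)
  have fn0: "is_functor (pcat (sem_unc C D P)) (pcat (sem_unc C D P')) (sem_unc_morph C D P' F)"
    unfolding sem_unc_simps sem_unc_morph_eq by (rule sem_morph_functor[OF vT vT' cm])
  have piar: "\<forall>a\<in>Ar (pcat (sem_unc C D P)). pi_ar (sem_unc C D P') (snd (sem_unc_morph C D P' F) a) = pi_ar (sem_unc C D P) a"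
  proof
    fix a assume "a \<in> Ar (pcat (sem_unc C D P))"
    then obtain p where p: "is_path ?T p" "a = pclass ?T p" by (auto simp: sem_Ar sem_unc_simps)
    note s = sem_unc_morph_pclass[OF vC vD vP vP' M p(1)]
    show "pi_ar (sem_unc C D P') (snd (sem_unc_morph C D P' F) a) = pi_ar (sem_unc C D P) a"
      using p s sem_simps[OF vT p(1)] sem_simps[OF vT' s(2)] by (simp add: sem_unc_simps apply_fst)
  qed
  have i0: "\<forall>a\<in>Ar (sem C). snd (sem_unc_morph C D P' F) (in0_ar (sem_unc C D P) a) = in0_ar (sem_unc C D P') a"
  proof
    fix a assume "a \<in> Ar (sem C)"
    then obtain r where r: "is_path C r" "a = pclass C r" by (auto simp: sem_Ar)
    have rr: "is_path ?T (embC r)" using r embC_simps by metis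
    show "snd (sem_unc_morph C D P' F) (in0_ar (sem_unc C D P) a) = in0_ar (sem_unc C D P') a"
      using r in0_pclass[OF vC vD vP r(1)] in0_pclass[OF vC vD vP' r(1)]
        sem_unc_morph_pclass(1)[OF vC vD vP vP' M rr] by (simp add: apply_totF_embC)
  qed
  have i1: "\<forall>a\<in>Ar (sem D). snd (sem_unc_morph C D P' F) (in1_ar (sem_unc C D P) a) = in1_ar (sem_unc C D P') a"
  proof
    fix a assume "a \<in> Ar (sem D)"
    then obtain r where r: "is_path D r" "a = pclass D r" by (auto simp: sem_Ar)
    have rr: "is_path ?T (embD r)" using r embD_simps by metis
    show "snd (sem_unc_morph C D P' F) (in1_ar (sem_unc C D P) a) = in1_ar (sem_unc C D P') a"
      using r in1_pclass[OF vC vD vP r(1)] in1_pclass[OF vC vD vP' r(1)]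
        sem_unc_morph_pclass(1)[OF vC vD vP vP' M rr] by (simp add: apply_totF_embD)
  qed
  show ?thesis unfolding prof_morph_def using fn0 piar i0 i1
    by (simp add: sem_unc_simps sem_unc_morph_eq sem_morph_def)
qed

lemma part_C:
  fixes C :: "('c, 'cf) catpres" and D :: "('d, 'df) catpres"
    and P :: "('c, 'd, 'cf, 'df, 'x) uncpres" and P' :: "('c, 'd, 'cf, 'df, 'y) uncpres"
  assumes vC: "valid_catpres C" and vD: "valid_catpres D" and vP: "valid_unc C D P" and vP': "valid_unc C D P'"
    and M: "unc_morph C D P P' F" and M': "unc_morph C D P P' F'" and E: "unc_equiv C D P P' F F'"
  shows "fun_eq_on (pcat (sem_unc C D P)) (sem_unc_morph C D P' F) (sem_unc_morph C D P' F')"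
  unfolding fun_eq_on_def
proof (intro conjI ballI)
  fix ob show "fst (sem_unc_morph C D P' F) ob = fst (sem_unc_morph C D P' F') ob"
    by (simp add: sem_unc_morph_eq sem_morph_def)
next
  fix a assume "a \<in> Ar (pcat (sem_unc C D P))"
  then obtain p where p: "is_path (tot C D P) p" "a = pclass (tot C D P) p" by (auto simp: sem_Ar sem_unc_simps)
  have "peq (tot C D P') (apply_path (\<lambda>s. s) (totF C D F) p) (apply_path (\<lambda>s. s) (totF C D F') p)"
    using equiv_peq[OF valid_tot[OF vC vD vP] valid_tot[OF vC vD vP'] _ _ _ p(1)] M M' E
    by (simp add: unc_morph_def unc_equiv_def)
  then show "snd (sem_unc_morph C D P' F) a = snd (sem_unc_morph C D P' F') a"
    using p sem_unc_morph_pclass[OF vC vD vP vP' M p(1)] sem_unc_morph_pclass[OF vC vD vP vP' M' p(1)]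
      pclass_eq_iff[OF valid_tot[OF vC vD vP']] by metis
qed

lemma apply_id_snd: "(\<And>f. snd (Ff f) = [f]) \<Longrightarrow> apply_path (\<lambda>s. s) Ff p = p"
  by (simp add: apply_path_def)

lemma part_D:
  fixes C :: "('c, 'cf) catpres" and D :: "('d, 'df) catpres"
    and P :: "('c, 'd, 'cf, 'df, 'x) uncpres"
  assumes vC: "valid_catpres C" and vD: "valid_catpres D" and vP: "valid_unc C D P"
  shows "fun_eq_on (pcat (sem_unc C D P)) (sem_unc_morph C D P (unc_id P)) (\<lambda>ob. ob, \<lambda>a. a)"
proof -
  have s: "snd (totF C D (unc_id P) f) = [f]" for f
    by (simp add: totF_def unc_id_def split: sum.split)
  show ?thesis unfolding fun_eq_on_def
    using sem_rep[OF valid_tot[OF vC vD vP]]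
    by (simp add: sem_unc_simps sem_unc_morph_eq sem_morph_def apply_id_snd[OF s])
qed

lemma concat_map_concat: "concat (map g (concat (map h xs))) = concat (map (\<lambda>x. concat (map g (h x))) xs)"
  by (induction xs) auto

lemma apply_apply:
  "apply_path (\<lambda>s. s) Gf (apply_path (\<lambda>s. s) Ff p) = apply_path (\<lambda>s. s) (\<lambda>f. apply_path (\<lambda>s. s) Gf (Ff f)) p"
  by (simp add: apply_path_def concat_map_concat)

lemma apply_cong_snd: "(\<And>f. snd (Ff f) = snd (Gf f)) \<Longrightarrow> apply_path Fs Ff p = apply_path Fs Gf p"
  by (simp add: apply_path_def)

lemma apply_unc_comp:
  "apply_path (\<lambda>s. s) (totF C D (unc_comp C D G F)) p =
   apply_path (\<lambda>s. s) (totF C D G) (apply_path (\<lambda>s. s) (totF C D F) p)"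
proof -
  have "snd (totF C D (unc_comp C D G F) f) = snd (apply_path (\<lambda>s. s) (totF C D G) (totF C D F f))" for f
    by (simp add: totF_def unc_comp_def apply_path_def split: sum.split)
  then show ?thesis unfolding apply_apply by (rule apply_cong_snd)
qed

lemma part_E:
  fixes C :: "('c, 'cf) catpres" and D :: "('d, 'df) catpres"
    and P :: "('c, 'd, 'cf, 'df, 'x) uncpres" and P' :: "('c, 'd, 'cf, 'df, 'y) uncpres"
    and P'' :: "('c, 'd, 'cf, 'df, 'z) uncpres"
  assumes vC: "valid_catpres C" and vD: "valid_catpres D" and vP: "valid_unc C D P" and vP': "valid_unc C D P'"
    and vP'': "valid_unc C D P''" and M: "unc_morph C D P P' F" and M': "unc_morph C D P' P'' G"
  shows "fun_eq_on (pcat (sem_unc C D P)) (sem_unc_morph C D P'' (unc_comp C D G F))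
          (fun_comp (sem_unc_morph C D P'' G) (sem_unc_morph C D P' F))"
  unfolding fun_eq_on_def
proof (intro conjI ballI)
  fix ob show "fst (sem_unc_morph C D P'' (unc_comp C D G F)) ob = fst (fun_comp (sem_unc_morph C D P'' G) (sem_unc_morph C D P' F)) ob"
    by (simp add: sem_unc_morph_eq sem_morph_def fun_comp_def)
next
  fix a assume "a \<in> Ar (pcat (sem_unc C D P))"
  then obtain p where p: "is_path (tot C D P) p" "a = pclass (tot C D P) p" by (auto simp: sem_Ar sem_unc_simps)
  note s1 = sem_unc_morph_pclass[OF vC vD vP vP' M p(1)]
  note s2 = sem_unc_morph_pclass[OF vC vD vP' vP'' M' s1(2)]
  have l: "snd (sem_unc_morph C D P'' (unc_comp C D G F)) a =
    pclass (tot C D P'') (apply_path (\<lambda>s. s) (totF C D (unc_comp C D G F)) (rep (pclass (tot C D P) p)))"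
    using p by (simp add: sem_unc_morph_eq sem_morph_def)
  have l2: "\<dots> = pclass (tot C D P'') (apply_path (\<lambda>s. s) (totF C D G) (apply_path (\<lambda>s. s) (totF C D F) p))"
  proof -
    have e: "apply_path (\<lambda>s. s) (totF C D (unc_comp C D G F)) = (\<lambda>q. apply_path (\<lambda>s. s) (totF C D G) (apply_path (\<lambda>s. s) (totF C D F) q))"
      using apply_unc_comp by blast
    have r: "peq (tot C D P) p (rep (pclass (tot C D P) p))" using rep_pclass[OF valid_tot[OF vC vD vP] p(1)] .
    have "peq (tot C D P') (apply_path (\<lambda>s. s) (totF C D F) p) (apply_path (\<lambda>s. s) (totF C D F) (rep (pclass (tot C D P) p)))"
      using morph_peq[OF valid_tot[OF vC vD vP] valid_tot[OF vC vD vP'] _ r] M by (simp add: unc_morph_def)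
    then have "peq (tot C D P'') (apply_path (\<lambda>s. s) (totF C D G) (apply_path (\<lambda>s. s) (totF C D F) p))
       (apply_path (\<lambda>s. s) (totF C D G) (apply_path (\<lambda>s. s) (totF C D F) (rep (pclass (tot C D P) p))))"
      using morph_peq[OF valid_tot[OF vC vD vP'] valid_tot[OF vC vD vP'']] M' by (simp add: unc_morph_def)
    then show ?thesis unfolding e using pclass_eq_iff[OF valid_tot[OF vC vD vP''] s2(2)] by metis
  qed
  show "snd (sem_unc_morph C D P'' (unc_comp C D G F)) a = snd (fun_comp (sem_unc_morph C D P'' G) (sem_unc_morph C D P' F)) a"
    using l l2 p s1 s2 by (simp add: fun_comp_def sem_unc_morph_eq sem_morph_def)
qed

lemma apply_single: "fst (Ff f) = Fs c \<Longrightarrow> apply_path Fs Ff (c, [f]) = Ff f"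
  by (cases "Ff f") (simp add: apply_path_def)

lemma part_F:
  fixes C :: "('c, 'cf) catpres" and D :: "('d, 'df) catpres"
    and P :: "('c, 'd, 'cf, 'df, 'x) uncpres" and P' :: "('c, 'd, 'cf, 'df, 'y) uncpres"
  assumes vC: "valid_catpres C" and vD: "valid_catpres D" and vP: "valid_unc C D P" and vP': "valid_unc C D P'"
    and M: "unc_morph C D P P' F" and M': "unc_morph C D P P' F'"
    and E: "fun_eq_on (pcat (sem_unc C D P)) (sem_unc_morph C D P' F) (sem_unc_morph C D P' F')"
  shows "unc_equiv C D P P' F F'"
  unfolding unc_equiv_def catpres_equiv_def
proof (intro conjI ballI)
  fix f assume f: "f \<in> Funs (tot C D P)"
  let ?T = "tot C D P" and ?T' = "tot C D P'"
  have vT: "valid_catpres ?T" and vT': "valid_catpres ?T'" using valid_tot vC vD vP vP' by blast+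
  have q: "is_path ?T (fsrc ?T f, [f])" using f vT by (simp add: is_path_def valid_catpres_def)
  have m: "is_path ?T' (totF C D F f)" "fst (totF C D F f) = fsrc ?T f"
    "fst (totF C D F' f) = fsrc ?T f"
    using M M' f by (auto simp: unc_morph_def catpres_morph_def)
  have "pclass ?T' (totF C D F f) = pclass ?T' (totF C D F' f)"
    using E sem_unc_morph_pclass(1)[OF vC vD vP vP' M q] sem_unc_morph_pclass(1)[OF vC vD vP vP' M' q]
      sem_ArI[OF q] apply_single[of "totF C D F" f "\<lambda>s. s", OF m(2)] apply_single[of "totF C D F'" f "\<lambda>s. s", OF m(3)]
    by (simp add: fun_eq_on_def sem_unc_simps)
  then show "peq ?T' (totF C D F f) (totF C D F' f)" using pclass_eq_iff[OF vT' m(1)] by blast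
qed simp

lemma part_G:
  fixes C :: "('c, 'cf) catpres" and D :: "('d, 'df) catpres"
    and P :: "('c, 'd, 'cf, 'df, 'x) uncpres" and P' :: "('c, 'd, 'cf, 'df, 'y) uncpres"
  assumes vC: "valid_catpres C" and vD: "valid_catpres D" and vP: "valid_unc C D P" and vP': "valid_unc C D P'"
    and G: "prof_morph (sem C) (sem D) (sem_unc C D P) (sem_unc C D P') G"
  shows "\<exists>F. unc_morph C D P P' F \<and> fun_eq_on (pcat (sem_unc C D P)) (sem_unc_morph C D P' F) G"
proof -
  let ?T = "tot C D P" and ?T' = "tot C D P'"
  have vT: "valid_catpres ?T" and vT': "valid_catpres ?T'" using valid_tot vC vD vP vP' by blast+
  have Gf: "is_functor (sem ?T) (sem ?T') G" using G by (simp add: prof_morph_def sem_unc_simps)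
  have Gob: "fst G s = s" if "s \<in> Sorts ?T" for s
  proof -
    have "fst G (Inl c) = Inl c" if "c \<in> Sorts C" for c
      using G that by (auto simp: prof_morph_def sem_unc_simps sem_def)
    moreover have "fst G (Inr d) = Inr d" if "d \<in> Sorts D" for d
      using G that by (auto simp: prof_morph_def sem_unc_simps sem_def)
    ultimately show ?thesis using \<open>s \<in> Sorts ?T\<close> by (auto simp: tot_simps)
  qed
  have G0: "snd G (in0_ar (sem_unc C D P) a) = in0_ar (sem_unc C D P') a" if "a \<in> Ar (sem C)" for a
    using G that by (simp add: prof_morph_def)
  have G1: "snd G (in1_ar (sem_unc C D P) a) = in1_ar (sem_unc C D P') a" if "a \<in> Ar (sem D)" for a
    using G that by (simp add: prof_morph_def)
  have Gar: "snd G X \<in> Ar (sem ?T')" "Dom (sem ?T') (snd G X) = fst G (Dom (sem ?T) X)"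
    "Cod (sem ?T') (snd G X) = fst G (Cod (sem ?T) X)" if "X \<in> Ar (sem ?T)" for X
    using Gf that by (auto simp: is_functor_def)
  define F where "F x = rep (snd G (pclass ?T (Inl (usrc P x), [Inr (Inl x)])))" for x
  have pathsym: "is_path ?T (fsrc ?T f, [f])" if "f \<in> Funs ?T" for f
    using that vT by (simp add: is_path_def valid_catpres_def)
  have step1: "snd G (pclass ?T (fsrc ?T f, [f])) = pclass ?T' (totF C D F f) \<and>
     is_path ?T' (totF C D F f) \<and> fst (totF C D F f) = fsrc ?T f \<and> path_end ?T' (totF C D F f) = ftgt ?T f"
    if f: "f \<in> Funs ?T" for f
    using f
  proof (cases rule: tot_fun_cases)
    case (C a)
    have r: "is_path C (fsrc C a, [a])" using C vC by (simp add: is_path_def valid_catpres_def)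
    have e: "totF C D F f = embC (fsrc C a, [a])" "(fsrc ?T f, [f]) = embC (fsrc C a, [a])"
      using C by (simp_all add: totF_def embC_def tot_simps)
    show ?thesis unfolding e
      using in0_pclass[OF vC vD vP r] in0_pclass[OF vC vD vP' r] G0[OF sem_ArI[OF r]] r C
        embC_simps(1)[of C D P' "(fsrc C a, [a])"]
      by (simp add: embC_simps embC_def path_end_def tot_simps)
  next
    case (D g)
    have r: "is_path D (fsrc D g, [g])" using D vD by (simp add: is_path_def valid_catpres_def)
    have e: "totF C D F f = embD (fsrc D g, [g])" "(fsrc ?T f, [f]) = embD (fsrc D g, [g])"
      using D by (simp_all add: totF_def embD_def tot_simps)
    show ?thesis unfolding e
      using in1_pclass[OF vC vD vP r] in1_pclass[OF vC vD vP' r] G1[OF sem_ArI[OF r]] r D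
        embD_simps(1)[of C D P' "(fsrc D g, [g])"]
      by (simp add: embD_simps embD_def path_end_def tot_simps)
  next
    case (P x)
    have X: "pclass ?T (fsrc ?T f, [f]) \<in> Ar (sem ?T)" using sem_ArI[OF pathsym[OF f]] .
    have e: "totF C D F f = F x" "(fsrc ?T f, [f]) = (Inl (usrc P x), [Inr (Inl x)])"
      using P by (simp_all add: totF_def tot_simps)
    have so: "Inl (usrc P x) \<in> Sorts ?T" "Inr (utgt P x) \<in> Sorts ?T"
      using vP P by (auto simp: valid_unc_def tot_simps)
    have dc: "Dom (sem ?T) (pclass ?T (fsrc ?T f, [f])) = Inl (usrc P x)"
      "Cod (sem ?T) (pclass ?T (fsrc ?T f, [f])) = Inr (utgt P x)"
      using sem_simps[OF vT pathsym[OF f]] P by (auto simp: tot_simps path_end_def)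
    have Y: "snd G (pclass ?T (fsrc ?T f, [f])) \<in> Ar (sem ?T')" using Gar(1)[OF X] .
    have Fx: "F x = rep (snd G (pclass ?T (fsrc ?T f, [f])))" using e(2) by (simp add: F_def P(1))
    have dY: "fst (F x) = Inl (usrc P x)" "path_end ?T' (F x) = Inr (utgt P x)"
      using Gar(2,3)[OF X] dc Gob so unfolding Fx by (simp_all add: sem_def)
    show ?thesis unfolding e(1) using sem_rep[OF vT' Y] Fx dY P
      by (simp add: tot_simps)
  qed
  have pm: "premorph ?T ?T' (\<lambda>s. s) (totF C D F)"
    using step1 by (simp add: premorph_def tot_simps)
  have key: "snd G (pclass ?T p) = pclass ?T' (apply_path (\<lambda>s. s) (totF C D F) p)"
    if p: "is_path ?T p" for p
  proof -
    obtain c fs where pc: "p = (c, fs)" by (cases p)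
    have "c \<in> Sorts ?T \<Longrightarrow> is_chain (fsrc ?T) (ftgt ?T) (Funs ?T) c fs \<Longrightarrow>
      snd G (pclass ?T (c, fs)) = pclass ?T' (apply_path (\<lambda>s. s) (totF C D F) (c, fs))"
    proof (induction fs arbitrary: c)
      case Nil
      have "snd G (Id (sem ?T) c) = Id (sem ?T') (fst G c)" using Gf Nil by (simp add: is_functor_def sem_def)
      then show ?case using Gob[OF Nil(1)] by (simp add: sem_id apply_Nil)
    next
      case (Cons f fs)
      have f: "f \<in> Funs ?T" "fsrc ?T f = c" using Cons.prems by auto
      have tg: "ftgt ?T f \<in> Sorts ?T" using vT f by (auto simp: valid_catpres_def)
      have rest: "is_path ?T (ftgt ?T f, fs)" using Cons.prems tg by (simp add: is_path_def)
      have IH: "snd G (pclass ?T (ftgt ?T f, fs)) = pclass ?T' (apply_path (\<lambda>s. s) (totF C D F) (ftgt ?T f, fs))"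
        using Cons.IH[OF tg] Cons.prems by simp
      note s1 = step1[OF f(1)]
      have sp: "is_path ?T (fsrc ?T f, [f])" using pathsym[OF f(1)] .
      have comp: "pclass ?T (c, f # fs) = Comp (sem ?T) (pclass ?T (fsrc ?T f, [f])) (pclass ?T (ftgt ?T f, fs))"
        using sem_comp[OF vT sp rest] f by (simp add: pcomp_def path_end_def)
      have cd: "Cod (sem ?T) (pclass ?T (fsrc ?T f, [f])) = Dom (sem ?T) (pclass ?T (ftgt ?T f, fs))"
        using sem_simps[OF vT sp] sem_simps[OF vT rest] by (simp add: path_end_def)
      have Gc: "snd G (pclass ?T (c, f # fs)) = Comp (sem ?T') (snd G (pclass ?T (fsrc ?T f, [f]))) (snd G (pclass ?T (ftgt ?T f, fs)))"
        using Gf sem_ArI[OF sp] sem_ArI[OF rest] cd comp by (simp add: is_functor_def)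
      have ar: "is_path ?T' (apply_path (\<lambda>s. s) (totF C D F) (ftgt ?T f, fs))"
        using morph_path0[OF vT pm rest] by simp
      have e2: "path_end ?T' (totF C D F f) = fst (apply_path (\<lambda>s. s) (totF C D F) (ftgt ?T f, fs))"
        using s1 by (simp add: apply_fst)
      have ap: "apply_path (\<lambda>s. s) (totF C D F) (c, f # fs) = pcomp (totF C D F f) (apply_path (\<lambda>s. s) (totF C D F) (ftgt ?T f, fs))"
        using apply_Cons[of "\<lambda>s. s" "totF C D F" c f fs "ftgt ?T f"] s1 f by (cases "totF C D F f") auto
      show ?case unfolding Gc IH ap using s1 sem_comp[OF vT' _ ar e2] by simp
    qed
    then show ?thesis using p pc by (auto simp: is_path_def)
  qed
  have cm: "catpres_morph ?T ?T' (\<lambda>s. s) (totF C D F)"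
    unfolding catpres_morph_def
  proof (intro conjI)
    show "\<forall>c\<in>Sorts ?T. c \<in> Sorts ?T'" by (simp add: tot_simps)
    show "\<forall>f\<in>Funs ?T. is_path ?T' (totF C D F f) \<and> fst (totF C D F f) = fsrc ?T f \<and>
        path_end ?T' (totF C D F f) = ftgt ?T f" using step1 by simp
    show "\<forall>(p, q)\<in>Eqs ?T. peq ?T' (apply_path (\<lambda>s. s) (totF C D F) p) (apply_path (\<lambda>s. s) (totF C D F) q)"
    proof (intro ballI, clarify)
      fix p q assume pq: "(p, q) \<in> Eqs ?T"
      then have "peq ?T p q" by (rule peq_ax)
      then have pp: "is_path ?T p" "is_path ?T q" "pclass ?T p = pclass ?T q"
        using peq_props[OF vT] pclass_eq_iff[OF vT] by auto
      then have "pclass ?T' (apply_path (\<lambda>s. s) (totF C D F) p) = pclass ?T' (apply_path (\<lambda>s. s) (totF C D F) q)"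
        using key by metis
      then show "peq ?T' (apply_path (\<lambda>s. s) (totF C D F) p) (apply_path (\<lambda>s. s) (totF C D F) q)"
        using pclass_eq_iff[OF vT'] morph_path0[OF vT pm pp(1)] by blast
    qed
  qed
  have um: "unc_morph C D P P' F"
    unfolding unc_morph_def
  proof (intro conjI ballI)
    fix x assume x: "x \<in> UFuns P"
    have f: "Inr (Inl x) \<in> Funs ?T" using x by (simp add: tot_simps)
    have e: "totF C D F (Inr (Inl x)) = F x" by (simp add: totF_def)
    show "cross_path C D P' (F x)" "fst (F x) = Inl (usrc P x)" "path_end (tot C D P') (F x) = Inr (utgt P x)"
      using step1[OF f] unfolding e by (simp_all add: cross_path_def tot_simps)
  qed (rule cm)
  have fe: "fun_eq_on (pcat (sem_unc C D P)) (sem_unc_morph C D P' F) G"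
    unfolding fun_eq_on_def
  proof (intro conjI ballI)
    fix ob assume "ob \<in> Ob (pcat (sem_unc C D P))"
    then show "fst (sem_unc_morph C D P' F) ob = fst G ob"
      using Gob by (simp add: sem_unc_simps sem_def sem_unc_morph_eq sem_morph_def)
  next
    fix a assume "a \<in> Ar (pcat (sem_unc C D P))"
    then obtain p where p: "is_path ?T p" "a = pclass ?T p" by (auto simp: sem_Ar sem_unc_simps)
    show "snd (sem_unc_morph C D P' F) a = snd G a"
      using sem_unc_morph_pclass(1)[OF vC vD vP vP' um p(1)] key[OF p(1)] p by simp
  qed
  show ?thesis using um fe by blast
qed

lemma cat_facts:
  assumes "is_category K"
  shows "a \<in> Ar K \<Longrightarrow> Dom K a \<in> Ob K" "a \<in> Ar K \<Longrightarrow> Cod K a \<in> Ob K"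
    "ob \<in> Ob K \<Longrightarrow> Id K ob \<in> Ar K" "ob \<in> Ob K \<Longrightarrow> Dom K (Id K ob) = ob" "ob \<in> Ob K \<Longrightarrow> Cod K (Id K ob) = ob"
    "a \<in> Ar K \<Longrightarrow> Comp K (Id K (Dom K a)) a = a" "a \<in> Ar K \<Longrightarrow> Comp K a (Id K (Cod K a)) = a"
    "a \<in> Ar K \<Longrightarrow> b \<in> Ar K \<Longrightarrow> c \<in> Ar K \<Longrightarrow> Cod K a = Dom K b \<Longrightarrow> Cod K b = Dom K c \<Longrightarrow>
        Comp K (Comp K a b) c = Comp K a (Comp K b c)"
  using assms unfolding is_category_def by blast+

lemma functor_facts:
  assumes "is_functor A B F"
  shows "ob \<in> Ob A \<Longrightarrow> fst F ob \<in> Ob B"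
    "a \<in> Ar A \<Longrightarrow> snd F a \<in> Ar B" "a \<in> Ar A \<Longrightarrow> Dom B (snd F a) = fst F (Dom A a)"
    "a \<in> Ar A \<Longrightarrow> Cod B (snd F a) = fst F (Cod A a)"
    "ob \<in> Ob A \<Longrightarrow> snd F (Id A ob) = Id B (fst F ob)"
    "a \<in> Ar A \<Longrightarrow> b \<in> Ar A \<Longrightarrow> Cod A a = Dom A b \<Longrightarrow> snd F (Comp A a b) = Comp B (snd F a) (snd F b)"
  using assms unfolding is_functor_def by blast+

lemma inverse_prof_morph:
  assumes PP: "is_profunctor CC DD P" and PP': "is_profunctor CC DD P'"
    and G: "prof_morph CC DD P P' G"
    and Hob: "\<And>ob. ob \<in> Ob (pcat P') \<Longrightarrow> fst H ob \<in> Ob (pcat P)"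
    and Har: "\<And>a. a \<in> Ar (pcat P') \<Longrightarrow> snd H a \<in> Ar (pcat P)"
    and HG: "fun_eq_on (pcat P) (fun_comp H G) (\<lambda>ob. ob, \<lambda>a. a)"
    and GH: "fun_eq_on (pcat P') (fun_comp G H) (\<lambda>ob. ob, \<lambda>a. a)"
  shows "prof_morph CC DD P' P H"
proof -
  have cP: "is_category (pcat P)" and cP': "is_category (pcat P')" using PP PP' by (simp_all add: is_profunctor_def)
  have Gf: "is_functor (pcat P) (pcat P') G" using G by (simp add: prof_morph_def)
  have HGob: "fst H (fst G ob) = ob" if "ob \<in> Ob (pcat P)" for ob using HG that by (simp add: fun_eq_on_def fun_comp_def)
  have HGar: "snd H (snd G a) = a" if "a \<in> Ar (pcat P)" for a using HG that by (simp add: fun_eq_on_def fun_comp_def)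
  have GHob: "fst G (fst H ob) = ob" if "ob \<in> Ob (pcat P')" for ob using GH that by (simp add: fun_eq_on_def fun_comp_def)
  have GHar: "snd G (snd H a) = a" if "a \<in> Ar (pcat P')" for a using GH that by (simp add: fun_eq_on_def fun_comp_def)
  have HDom: "Dom (pcat P) (snd H a) = fst H (Dom (pcat P') a)" if a: "a \<in> Ar (pcat P')" for a
  proof -
    have "fst G (Dom (pcat P) (snd H a)) = Dom (pcat P') a"
      using functor_facts(3)[OF Gf Har[OF a]] GHar[OF a] by simp
    then show ?thesis using HGob[OF cat_facts(1)[OF cP Har[OF a]]] by metis
  qed
  have HCod: "Cod (pcat P) (snd H a) = fst H (Cod (pcat P') a)" if a: "a \<in> Ar (pcat P')" for a
  proof -
    have "fst G (Cod (pcat P) (snd H a)) = Cod (pcat P') a"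
      using functor_facts(4)[OF Gf Har[OF a]] GHar[OF a] by simp
    then show ?thesis using HGob[OF cat_facts(2)[OF cP Har[OF a]]] by metis
  qed
  have Hf: "is_functor (pcat P') (pcat P) H"
    unfolding is_functor_def
  proof (intro conjI ballI impI)
    fix ob assume ob: "ob \<in> Ob (pcat P')"
    show "fst H ob \<in> Ob (pcat P)" using Hob[OF ob] .
    have i: "Id (pcat P) (fst H ob) \<in> Ar (pcat P)" using cat_facts(3)[OF cP Hob[OF ob]] .
    have "snd G (Id (pcat P) (fst H ob)) = Id (pcat P') ob"
      using functor_facts(5)[OF Gf Hob[OF ob]] GHob[OF ob] by simp
    then show "snd H (Id (pcat P') ob) = Id (pcat P) (fst H ob)" using HGar[OF i] by metis
  next
    fix a assume a: "a \<in> Ar (pcat P')"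
    show "snd H a \<in> Ar (pcat P)" "Dom (pcat P) (snd H a) = fst H (Dom (pcat P') a)"
      "Cod (pcat P) (snd H a) = fst H (Cod (pcat P') a)" using Har[OF a] HDom[OF a] HCod[OF a] by auto
  next
    fix a b assume ab: "a \<in> Ar (pcat P')" "b \<in> Ar (pcat P')" "Cod (pcat P') a = Dom (pcat P') b"
    have m: "Cod (pcat P) (snd H a) = Dom (pcat P) (snd H b)" using HDom HCod ab by simp
    have c: "Comp (pcat P) (snd H a) (snd H b) \<in> Ar (pcat P)" using cat_comp_dc(1)[OF cP Har[OF ab(1)] Har[OF ab(2)] m] .
    have "snd G (Comp (pcat P) (snd H a) (snd H b)) = Comp (pcat P') a b"
      using functor_facts(6)[OF Gf Har[OF ab(1)] Har[OF ab(2)] m] GHar ab by simp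
    then show "snd H (Comp (pcat P') a b) = Comp (pcat P) (snd H a) (snd H b)" using HGar[OF c] by metis
  qed
  have in0ob: "in0_ob P ob \<in> Ob (pcat P)" if "ob \<in> Ob CC" for ob
    using PP that unfolding is_profunctor_def is_functor_def by auto
  have in0ar: "in0_ar P a \<in> Ar (pcat P)" if "a \<in> Ar CC" for a
    using PP that unfolding is_profunctor_def is_functor_def by auto
  have in1ob: "in1_ob P ob \<in> Ob (pcat P)" if "ob \<in> Ob DD" for ob
    using PP that unfolding is_profunctor_def is_functor_def by auto
  have in1ar: "in1_ar P a \<in> Ar (pcat P)" if "a \<in> Ar DD" for a
    using PP that unfolding is_profunctor_def is_functor_def by auto
  have Gpo: "\<forall>ob\<in>Ob (pcat P). pi_ob P' (fst G ob) = pi_ob P ob"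
    and Gpa: "\<forall>a\<in>Ar (pcat P). pi_ar P' (snd G a) = pi_ar P a"
    and G0o: "\<forall>ob\<in>Ob CC. fst G (in0_ob P ob) = in0_ob P' ob"
    and G0a: "\<forall>a\<in>Ar CC. snd G (in0_ar P a) = in0_ar P' a"
    and G1o: "\<forall>ob\<in>Ob DD. fst G (in1_ob P ob) = in1_ob P' ob"
    and G1a: "\<forall>a\<in>Ar DD. snd G (in1_ar P a) = in1_ar P' a"
    using G unfolding prof_morph_def by blast+
  show ?thesis unfolding prof_morph_def
  proof (intro conjI ballI)
    show "is_functor (pcat P') (pcat P) H" using Hf .
  next
    fix ob assume ob: "ob \<in> Ob (pcat P')"
    show "pi_ob P (fst H ob) = pi_ob P' ob" using Gpo Hob[OF ob] GHob[OF ob] by metis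
  next
    fix a assume a: "a \<in> Ar (pcat P')"
    show "pi_ar P (snd H a) = pi_ar P' a" using Gpa Har[OF a] GHar[OF a] by metis
  next
    fix ob assume ob: "ob \<in> Ob CC"
    show "fst H (in0_ob P' ob) = in0_ob P ob" using G0o ob HGob[OF in0ob[OF ob]] by metis
  next
    fix a assume a: "a \<in> Ar CC"
    show "snd H (in0_ar P' a) = in0_ar P a" using G0a a HGar[OF in0ar[OF a]] by metis
  next
    fix ob assume ob: "ob \<in> Ob DD"
    show "fst H (in1_ob P' ob) = in1_ob P ob" using G1o ob HGob[OF in1ob[OF ob]] by metis
  next
    fix a assume a: "a \<in> Ar DD"
    show "snd H (in1_ar P' a) = in1_ar P a" using G1a a HGar[OF in1ar[OF a]] by metis
  qed
qed

lemma sem_Ob: "Ob (sem C) = Sorts C"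
  by (simp add: sem_def)

lemma same_fields_path:
  assumes "Sorts X = Sorts Y" "Funs X = Funs Y" "fsrc X = fsrc Y" "ftgt X = ftgt Y"
  shows "is_path X p = is_path Y p" "path_end X p = path_end Y p"
  unfolding is_path_def path_end_def assms by simp_all

locale qpro =
  fixes C :: "('c, 'cf) catpres" and D :: "('d, 'df) catpres"
    and Q :: "('c, ('c \<times> 'cf list) set, 'd, ('d \<times> 'df list) set, 'o, 'a) profunctor"
  assumes vC: "valid_catpres C" and vD: "valid_catpres D" and QP: "is_profunctor (sem C) (sem D) Q"
begin

abbreviation "K \<equiv> pcat Q"

lemma QF: "is_category K" "is_functor K cat_two (pi_ob Q, pi_ar Q)"
  "is_functor (sem C) K (in0_ob Q, in0_ar Q)" "is_functor (sem D) K (in1_ob Q, in1_ar Q)"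
  "inj_on (in0_ob Q) (Sorts C)" "inj_on (in0_ar Q) (Ar (sem C))"
  "in0_ob Q ` Sorts C = {ob \<in> Ob K. pi_ob Q ob = False}"
  "in0_ar Q ` Ar (sem C) = {a \<in> Ar K. pi_ar Q a = (False, False)}"
  "inj_on (in1_ob Q) (Sorts D)" "inj_on (in1_ar Q) (Ar (sem D))"
  "in1_ob Q ` Sorts D = {ob \<in> Ob K. pi_ob Q ob = True}"
  "in1_ar Q ` Ar (sem D) = {a \<in> Ar K. pi_ar Q a = (True, True)}"
  using QP unfolding is_profunctor_def sem_Ob by simp_all

lemma piar: assumes "a \<in> Ar K" shows "pi_ar Q a = (pi_ob Q (Dom K a), pi_ob Q (Cod K a))"
proof -
  have "fst (pi_ar Q a) = pi_ob Q (Dom K a)" "snd (pi_ar Q a) = pi_ob Q (Cod K a)"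
    using functor_facts(3,4)[OF QF(2) assms] by (simp_all add: cat_two_def)
  then show ?thesis by (cases "pi_ar Q a") simp
qed

lemma piar_le: assumes "a \<in> Ar K" shows "pi_ob Q (Dom K a) \<le> pi_ob Q (Cod K a)"
  using functor_facts(2)[OF QF(2) assms] piar[OF assms] by (simp add: cat_two_def)

lemma fib0: assumes "ob \<in> Ob K" "\<not> pi_ob Q ob"
  shows "inv_into (Sorts C) (in0_ob Q) ob \<in> Sorts C" "in0_ob Q (inv_into (Sorts C) (in0_ob Q) ob) = ob"
proof -
  have "ob \<in> in0_ob Q ` Sorts C" using assms QF(7) by auto
  then show "inv_into (Sorts C) (in0_ob Q) ob \<in> Sorts C" "in0_ob Q (inv_into (Sorts C) (in0_ob Q) ob) = ob"
    by (auto intro: inv_into_into f_inv_into_f)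
qed

lemma fib1: assumes "ob \<in> Ob K" "pi_ob Q ob"
  shows "inv_into (Sorts D) (in1_ob Q) ob \<in> Sorts D" "in1_ob Q (inv_into (Sorts D) (in1_ob Q) ob) = ob"
proof -
  have "ob \<in> in1_ob Q ` Sorts D" using assms QF(11) by auto
  then show "inv_into (Sorts D) (in1_ob Q) ob \<in> Sorts D" "in1_ob Q (inv_into (Sorts D) (in1_ob Q) ob) = ob"
    by (auto intro: inv_into_into f_inv_into_f)
qed

lemma ob0: assumes "c \<in> Sorts C"
  shows "in0_ob Q c \<in> Ob K" "\<not> pi_ob Q (in0_ob Q c)" "inv_into (Sorts C) (in0_ob Q) (in0_ob Q c) = c"
  using assms QF(7) inv_into_f_f[OF QF(5) assms] by auto

lemma ob1: assumes "d \<in> Sorts D"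
  shows "in1_ob Q d \<in> Ob K" "pi_ob Q (in1_ob Q d)" "inv_into (Sorts D) (in1_ob Q) (in1_ob Q d) = d"
  using assms QF(11) inv_into_f_f[OF QF(9) assms] by auto

definition P0 :: "('c, 'd, 'cf, 'df, 'a) uncpres" where
  "P0 = \<lparr>UFuns = {a \<in> Ar K. pi_ar Q a = (False, True)},
         usrc = (\<lambda>a. inv_into (Sorts C) (in0_ob Q) (Dom K a)),
         utgt = (\<lambda>a. inv_into (Sorts D) (in1_ob Q) (Cod K a)),
         UEqs = {}\<rparr>"

abbreviation "T0 \<equiv> tot C D P0"

definition qob :: "'c + 'd \<Rightarrow> 'o" where
  "qob s = case_sum (in0_ob Q) (in1_ob Q) s"

definition qsym :: "'cf + 'a + 'df \<Rightarrow> 'a" where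
  "qsym f = case_sum (\<lambda>a. in0_ar Q (pclass C (fsrc C a, [a])))
               (case_sum (\<lambda>x. x) (\<lambda>g. in1_ar Q (pclass D (fsrc D g, [g])))) f"

fun ich :: "'c + 'd \<Rightarrow> ('cf + 'a + 'df) list \<Rightarrow> 'a" where
  "ich c [] = Id K (qob c)"
| "ich c (f # fs) = Comp K (qsym f) (ich (ftgt T0 f) fs)"

definition interp :: "('c + 'd) \<times> ('cf + 'a + 'df) list \<Rightarrow> 'a" where
  "interp p = ich (fst p) (snd p)"

definition QPres :: "('c, 'd, 'cf, 'df, 'a) uncpres" where
  "QPres = P0\<lparr>UEqs := {(p, q). cross_path C D P0 p \<and> cross_path C D P0 q \<and> parallel T0 p q \<and> interp p = interp q}\<rparr>"

abbreviation "T \<equiv> tot C D QPres"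

lemma T_fields: "Sorts T = Sorts T0" "Funs T = Funs T0" "fsrc T = fsrc T0" "ftgt T = ftgt T0"
  by (simp_all add: tot_def QPres_def P0_def)

lemma T_path: "is_path T = is_path T0" "path_end T = path_end T0"
  using same_fields_path[OF T_fields] by (auto intro!: ext)

lemma T_cross: "cross_path C D QPres = cross_path C D P0"
  by (simp add: fun_eq_iff cross_path_def T_path)

lemma QPres_simps: "UFuns QPres = {a \<in> Ar K. pi_ar Q a = (False, True)}"
  "usrc QPres = (\<lambda>a. inv_into (Sorts C) (in0_ob Q) (Dom K a))"
  "utgt QPres = (\<lambda>a. inv_into (Sorts D) (in1_ob Q) (Cod K a))"
  by (simp_all add: QPres_def P0_def)

lemma QPres_UEqs: "UEqs QPres = {(p, q). cross_path C D QPres p \<and> cross_path C D QPres q \<and> parallel T p q \<and> interp p = interp q}"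
proof -
  have h: "UEqs QPres = {(p, q). cross_path C D P0 p \<and> cross_path C D P0 q \<and> parallel T0 p q \<and> interp p = interp q}"
    by (simp add: QPres_def)
  show ?thesis unfolding h T_cross parallel_def T_path ..
qed

lemma ufun: assumes "x \<in> UFuns QPres"
  shows "x \<in> Ar K" "usrc QPres x \<in> Sorts C" "utgt QPres x \<in> Sorts D"
    "in0_ob Q (usrc QPres x) = Dom K x" "in1_ob Q (utgt QPres x) = Cod K x"
proof -
  have x: "x \<in> Ar K" "pi_ar Q x = (False, True)" using assms by (auto simp: QPres_simps)
  then have "\<not> pi_ob Q (Dom K x)" "pi_ob Q (Cod K x)" using piar by auto
  then show "x \<in> Ar K" "usrc QPres x \<in> Sorts C" "utgt QPres x \<in> Sorts D"
    "in0_ob Q (usrc QPres x) = Dom K x" "in1_ob Q (utgt QPres x) = Cod K x"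
    using fib0 fib1 cat_facts(1,2)[OF QF(1) x(1)] x by (auto simp: QPres_simps)
qed

lemma vQ: "valid_unc C D QPres"
  unfolding valid_unc_def using ufun by (auto simp: QPres_simps QPres_UEqs)

lemma vT: "valid_catpres T" using valid_tot[OF vC vD vQ] .

lemma qob_in: "s \<in> Sorts T \<Longrightarrow> qob s \<in> Ob K"
  using ob0 ob1 by (auto simp: tot_simps qob_def)

lemma qsym_conj: assumes "f \<in> Funs T"
  shows "qsym f \<in> Ar K \<and> Dom K (qsym f) = qob (fsrc T f) \<and> Cod K (qsym f) = qob (ftgt T f)"
  using assms
proof (cases rule: tot_fun_cases)
  case (C a)
  have r: "is_path C (fsrc C a, [a])" using C vC by (simp add: is_path_def valid_catpres_def)
  show "qsym f \<in> Ar K \<and> Dom K (qsym f) = qob (fsrc T f) \<and> Cod K (qsym f) = qob (ftgt T f)"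
    using functor_facts(2,3,4)[OF QF(3) sem_ArI[OF r]] sem_simps[OF vC r] C
    by (simp_all add: qsym_def qob_def tot_simps path_end_def)
next
  case (D g)
  have r: "is_path D (fsrc D g, [g])" using D vD by (simp add: is_path_def valid_catpres_def)
  show "qsym f \<in> Ar K \<and> Dom K (qsym f) = qob (fsrc T f) \<and> Cod K (qsym f) = qob (ftgt T f)"
    using functor_facts(2,3,4)[OF QF(4) sem_ArI[OF r]] sem_simps[OF vD r] D
    by (simp_all add: qsym_def qob_def tot_simps path_end_def)
next
  case (P x)
  show "qsym f \<in> Ar K \<and> Dom K (qsym f) = qob (fsrc T f) \<and> Cod K (qsym f) = qob (ftgt T f)"
    using ufun[OF P(2)] P by (simp_all add: qsym_def qob_def tot_simps)
qed

lemma qsym_facts: assumes "f \<in> Funs T"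
  shows "qsym f \<in> Ar K" "Dom K (qsym f) = qob (fsrc T f)" "Cod K (qsym f) = qob (ftgt T f)"
  using qsym_conj[OF assms] by auto

lemma interp_facts: assumes "is_path T p"
  shows "interp p \<in> Ar K \<and> Dom K (interp p) = qob (fst p) \<and> Cod K (interp p) = qob (path_end T p)"
proof -
  obtain c fs where pc: "p = (c, fs)" by (cases p)
  have "c \<in> Sorts T \<Longrightarrow> is_chain (fsrc T) (ftgt T) (Funs T) c fs \<Longrightarrow>
     ich c fs \<in> Ar K \<and> Dom K (ich c fs) = qob c \<and> Cod K (ich c fs) = qob (path_end T (c, fs))"
  proof (induction fs arbitrary: c)
    case Nil
    then show ?case using cat_facts(3,4,5)[OF QF(1) qob_in[OF Nil(1)]] by (simp add: path_end_def)
  next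
    case (Cons f fs)
    have f: "f \<in> Funs T" "fsrc T f = c" using Cons.prems by auto
    have tg: "ftgt T f \<in> Sorts T" using vT f by (auto simp: valid_catpres_def)
    have IH: "ich (ftgt T f) fs \<in> Ar K \<and> Dom K (ich (ftgt T f) fs) = qob (ftgt T f) \<and>
       Cod K (ich (ftgt T f) fs) = qob (path_end T (ftgt T f, fs))"
      using Cons.IH[OF tg] Cons.prems by simp
    note q = qsym_facts[OF f(1)]
    have m: "Cod K (qsym f) = Dom K (ich (ftgt T f) fs)" using q IH by simp
    show ?case using cat_comp_dc[OF QF(1) q(1) _ m] IH q f path_end_Cons[of T c f fs]
      by (simp add: T_fields)
  qed
  then show ?thesis using assms pc by (auto simp: is_path_def interp_def)
qed

lemma interp_pcomp: assumes "is_path T p" "is_path T q" "path_end T p = fst q"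
  shows "interp (pcomp p q) = Comp K (interp p) (interp q)"
proof -
  obtain c fs where pc: "p = (c, fs)" by (cases p)
  have "c \<in> Sorts T \<Longrightarrow> is_chain (fsrc T) (ftgt T) (Funs T) c fs \<Longrightarrow> path_end T (c, fs) = fst q \<Longrightarrow>
     ich c (fs @ snd q) = Comp K (ich c fs) (interp q)"
  proof (induction fs arbitrary: c)
    case Nil
    from Nil have c: "c = fst q" by (simp add: path_end_def)
    have iq: "interp q \<in> Ar K" "Dom K (interp q) = qob c" using interp_facts[OF assms(2)] c by auto
    have "Comp K (Id K (qob c)) (interp q) = interp q" using cat_facts(6)[OF QF(1) iq(1)] iq(2) by simp
    then show ?case using c by (simp add: interp_def)
  next
    case (Cons f fs)
    have f: "f \<in> Funs T" "fsrc T f = c" using Cons.prems by auto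
    have tg: "ftgt T f \<in> Sorts T" using vT f by (auto simp: valid_catpres_def)
    have rp: "is_path T (ftgt T f, fs)" using tg Cons.prems by (simp add: is_path_def)
    have IH: "ich (ftgt T f) (fs @ snd q) = Comp K (ich (ftgt T f) fs) (interp q)"
      using Cons.IH[OF tg] Cons.prems path_end_Cons[of T c f fs] by simp
    note q = qsym_facts[OF f(1)]
    note r = interp_facts[OF rp]
    note qq = interp_facts[OF assms(2)]
    have e: "path_end T (ftgt T f, fs) = fst q" using Cons.prems path_end_Cons[of T c f fs] by simp
    show ?case using IH cat_facts(8)[OF QF(1) q(1) _ qq[THEN conjunct1]] r q qq e
      by (simp add: interp_def T_fields)
  qed
  then show ?thesis using assms pc by (auto simp: is_path_def interp_def pcomp_def)
qed

lemma interp_single: assumes "f \<in> Funs T" shows "interp (fsrc T f, [f]) = qsym f"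
  using cat_facts(7)[OF QF(1) qsym_facts(1)[OF assms]] qsym_facts[OF assms]
  by (simp add: interp_def T_fields)

lemma interp_embC: assumes "is_path C r" shows "interp (embC r) = in0_ar Q (pclass C r)"
proof -
  obtain c fs where pc: "r = (c, fs)" by (cases r)
  have "c \<in> Sorts C \<Longrightarrow> is_chain (fsrc C) (ftgt C) (Funs C) c fs \<Longrightarrow>
     ich (Inl c) (map Inl fs) = in0_ar Q (pclass C (c, fs))"
  proof (induction fs arbitrary: c)
    case Nil
    then show ?case using functor_facts(5)[OF QF(3), of c]
      by (simp add: sem_Ob sem_id qob_def)
  next
    case (Cons a fs)
    have a: "a \<in> Funs C" "fsrc C a = c" using Cons.prems by auto
    have tg: "ftgt C a \<in> Sorts C" using vC a by (auto simp: valid_catpres_def)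
    have rp: "is_path C (ftgt C a, fs)" using tg Cons.prems by (simp add: is_path_def)
    have sp: "is_path C (c, [a])" using a Cons.prems by (simp add: is_path_def)
    have e: "path_end C (c, [a]) = fst (ftgt C a, fs)" by (simp add: path_end_def)
    have cmp: "pclass C (c, a # fs) = Comp (sem C) (pclass C (c, [a])) (pclass C (ftgt C a, fs))"
      using sem_comp[OF vC sp rp e] by (simp add: pcomp_def)
    have m: "Cod (sem C) (pclass C (c, [a])) = Dom (sem C) (pclass C (ftgt C a, fs))"
      using sem_simps[OF vC sp] sem_simps[OF vC rp] by (simp add: path_end_def)
    show ?case using Cons.IH[OF tg] Cons.prems cmp functor_facts(6)[OF QF(3) sem_ArI[OF sp] sem_ArI[OF rp] m] a
      by (simp add: qsym_def tot_simps T_fields[symmetric])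
  qed
  then show ?thesis using assms pc by (auto simp: is_path_def interp_def embC_def)
qed

lemma interp_embD: assumes "is_path D r" shows "interp (embD r) = in1_ar Q (pclass D r)"
proof -
  obtain c fs where pc: "r = (c, fs)" by (cases r)
  have "c \<in> Sorts D \<Longrightarrow> is_chain (fsrc D) (ftgt D) (Funs D) c fs \<Longrightarrow>
     ich (Inr c) (map (\<lambda>g. Inr (Inr g)) fs) = in1_ar Q (pclass D (c, fs))"
  proof (induction fs arbitrary: c)
    case Nil
    then show ?case using functor_facts(5)[OF QF(4), of c]
      by (simp add: sem_Ob sem_id qob_def)
  next
    case (Cons a fs)
    have a: "a \<in> Funs D" "fsrc D a = c" using Cons.prems by auto
    have tg: "ftgt D a \<in> Sorts D" using vD a by (auto simp: valid_catpres_def)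
    have rp: "is_path D (ftgt D a, fs)" using tg Cons.prems by (simp add: is_path_def)
    have sp: "is_path D (c, [a])" using a Cons.prems by (simp add: is_path_def)
    have e: "path_end D (c, [a]) = fst (ftgt D a, fs)" by (simp add: path_end_def)
    have cmp: "pclass D (c, a # fs) = Comp (sem D) (pclass D (c, [a])) (pclass D (ftgt D a, fs))"
      using sem_comp[OF vD sp rp e] by (simp add: pcomp_def)
    have m: "Cod (sem D) (pclass D (c, [a])) = Dom (sem D) (pclass D (ftgt D a, fs))"
      using sem_simps[OF vD sp] sem_simps[OF vD rp] by (simp add: path_end_def)
    show ?case using Cons.IH[OF tg] Cons.prems cmp functor_facts(6)[OF QF(4) sem_ArI[OF sp] sem_ArI[OF rp] m] a
      by (simp add: qsym_def tot_simps T_fields[symmetric])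
  qed
  then show ?thesis using assms pc by (auto simp: is_path_def interp_def embD_def)
qed

end

context qpro
begin

lemma Eqs_T: "Eqs T = (\<lambda>(p, q). (embC p, embC q)) ` Eqs C \<union> UEqs QPres \<union> (\<lambda>(p, q). (embD p, embD q)) ` Eqs D"
  by (simp add: tot_def)

lemma interp_peq: "peq T p q \<Longrightarrow> interp p = interp q"
proof (induction rule: peq.induct)
  case (peq_ax p q)
  then have "(p, q) \<in> (\<lambda>(p, q). (embC p, embC q)) ` Eqs C \<union> UEqs QPres \<union> (\<lambda>(p, q). (embD p, embD q)) ` Eqs D"
    by (simp add: Eqs_T)
  then show ?case
  proof (elim UnE imageE)
    fix e assume e: "e \<in> Eqs C" "(p, q) = (case e of (p, q) \<Rightarrow> (embC p, embC q))"
    obtain p0 q0 where pq: "e = (p0, q0)" by (cases e)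
    have h: "is_path C p0" "is_path C q0" "peq C p0 q0" using vC e pq by (auto simp: valid_catpres_def intro: peq.peq_ax)
    then have "pclass C p0 = pclass C q0" using pclass_eq_iff[OF vC h(1)] by blast
    then show ?thesis using e pq interp_embC[OF h(1)] interp_embC[OF h(2)] by auto
  next
    fix e assume e: "e \<in> Eqs D" "(p, q) = (case e of (p, q) \<Rightarrow> (embD p, embD q))"
    obtain p0 q0 where pq: "e = (p0, q0)" by (cases e)
    have h: "is_path D p0" "is_path D q0" "peq D p0 q0" using vD e pq by (auto simp: valid_catpres_def intro: peq.peq_ax)
    then have "pclass D p0 = pclass D q0" using pclass_eq_iff[OF vD h(1)] by blast
    then show ?thesis using e pq interp_embD[OF h(1)] interp_embD[OF h(2)] by auto
  next
    assume "(p, q) \<in> UEqs QPres"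
    then show ?thesis by (simp add: QPres_UEqs)
  qed
next
  case (peq_refl p)
  then show ?case by simp
next
  case (peq_sym p q)
  then show ?case by simp
next
  case (peq_trans p q r)
  then show ?case by simp
next
  case (peq_post p q f)
  have pp: "is_path T p" "is_path T q" "path_end T p = path_end T q" using peq_props[OF vT peq_post.hyps(1)] by auto
  have sp: "is_path T (fsrc T f, [f])" using peq_post.hyps(2) vT by (simp add: is_path_def valid_catpres_def)
  have e1: "(fst p, snd p @ [f]) = pcomp p (fsrc T f, [f])" "(fst q, snd q @ [f]) = pcomp q (fsrc T f, [f])"
    by (simp_all add: pcomp_def)
  show ?case unfolding e1 using interp_pcomp[OF pp(1) sp] interp_pcomp[OF pp(2) sp] peq_post pp(3)
    by simp
next
  case (peq_pre p q f)
  have pp: "is_path T p" "is_path T q" "fst p = fst q" using peq_props[OF vT peq_pre.hyps(1)] by auto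
  have sp: "is_path T (fsrc T f, [f])" using peq_pre.hyps(2) vT by (simp add: is_path_def valid_catpres_def)
  have e1: "(fsrc T f, f # snd p) = pcomp (fsrc T f, [f]) p" "(fsrc T f, f # snd q) = pcomp (fsrc T f, [f]) q"
    by (simp_all add: pcomp_def)
  have en: "path_end T (fsrc T f, [f]) = fst p" using peq_pre.hyps(3) by (simp add: path_end_def)
  show ?case unfolding e1 using interp_pcomp[OF sp pp(1) en] interp_pcomp[OF sp pp(2)] en pp(3) peq_pre.IH
    by simp
qed

definition Gq :: "('c + 'd \<Rightarrow> 'o) \<times> ((('c + 'd) \<times> ('cf + 'a + 'df) list) set \<Rightarrow> 'a)" where
  "Gq = (qob, \<lambda>X. interp (rep X))"

lemma Gq_pclass: "is_path T p \<Longrightarrow> snd Gq (pclass T p) = interp p"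
  using interp_peq[OF rep_pclass[OF vT]] by (simp add: Gq_def)

lemma qob_pi: "s \<in> Sorts T \<Longrightarrow> pi_ob Q (qob s) = (\<not> isl s)"
  using ob0 ob1 by (auto simp: tot_simps qob_def)

lemma Gq_morph: "prof_morph (sem C) (sem D) (sem_unc C D QPres) Q Gq"
proof -
  have F: "is_functor (sem T) K Gq"
    unfolding is_functor_def
  proof (intro conjI ballI impI)
    fix ob assume "ob \<in> Ob (sem T)"
    then have ob: "ob \<in> Sorts T" by (simp add: sem_Ob)
    show "fst Gq ob \<in> Ob K" using qob_in[OF ob] by (simp add: Gq_def)
    have p: "is_path T (ob, [])" using ob by (simp add: is_path_def)
    show "snd Gq (Id (sem T) ob) = Id K (fst Gq ob)"
      using Gq_pclass[OF p] by (simp add: sem_id interp_def Gq_def)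
  next
    fix a assume "a \<in> Ar (sem T)"
    then obtain p where p: "is_path T p" "a = pclass T p" by (auto simp: sem_Ar)
    show "snd Gq a \<in> Ar K" "Dom K (snd Gq a) = fst Gq (Dom (sem T) a)" "Cod K (snd Gq a) = fst Gq (Cod (sem T) a)"
      using interp_facts[OF p(1)] Gq_pclass[OF p(1)] sem_simps[OF vT p(1)] p(2) by (simp_all add: Gq_def)
  next
    fix a b assume ab: "a \<in> Ar (sem T)" "b \<in> Ar (sem T)" "Cod (sem T) a = Dom (sem T) b"
    then obtain p q where p: "is_path T p" "a = pclass T p" and q: "is_path T q" "b = pclass T q"
      by (auto simp: sem_Ar)
    have e: "path_end T p = fst q" using ab p q sem_simps[OF vT p(1)] sem_simps[OF vT q(1)] by simp
    show "snd Gq (Comp (sem T) a b) = Comp K (snd Gq a) (snd Gq b)"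
      using sem_comp[OF vT p(1) q(1) e] Gq_pclass[OF is_path_pcomp[OF p(1) q(1) e]] Gq_pclass[OF p(1)]
        Gq_pclass[OF q(1)] interp_pcomp[OF p(1) q(1) e] p q by simp
  qed
  show ?thesis unfolding prof_morph_def sem_unc_simps(1)
  proof (intro conjI ballI)
    show "is_functor (sem T) K Gq" using F .
  next
    fix ob assume "ob \<in> Ob (sem T)"
    then show "pi_ob Q (fst Gq ob) = pi_ob (sem_unc C D QPres) ob"
      using qob_pi by (simp add: sem_Ob Gq_def sem_unc_simps)
  next
    fix a assume "a \<in> Ar (sem T)"
    then obtain p where p: "is_path T p" "a = pclass T p" by (auto simp: sem_Ar)
    have s: "fst p \<in> Sorts T" "path_end T p \<in> Sorts T" using p(1) path_end_in[OF vT p(1)] by (auto simp: is_path_def)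
    show "pi_ar Q (snd Gq a) = pi_ar (sem_unc C D QPres) a"
      using piar[of "interp p"] interp_facts[OF p(1)] Gq_pclass[OF p(1)] p(2) sem_simps[OF vT p(1)]
        qob_pi[OF s(1)] qob_pi[OF s(2)] by (simp add: sem_unc_simps)
  next
    fix ob assume "ob \<in> Ob (sem C)"
    then show "fst Gq (in0_ob (sem_unc C D QPres) ob) = in0_ob Q ob" by (simp add: Gq_def qob_def sem_unc_simps)
  next
    fix ob assume "ob \<in> Ob (sem D)"
    then show "fst Gq (in1_ob (sem_unc C D QPres) ob) = in1_ob Q ob" by (simp add: Gq_def qob_def sem_unc_simps)
  next
    fix a assume "a \<in> Ar (sem C)"
    then obtain r where r: "is_path C r" "a = pclass C r" by (auto simp: sem_Ar)
    have rr: "is_path T (embC r)" using r embC_simps by metis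
    show "snd Gq (in0_ar (sem_unc C D QPres) a) = in0_ar Q a"
      using in0_pclass[OF vC vD vQ r(1)] Gq_pclass[OF rr] interp_embC[OF r(1)] r(2) by simp
  next
    fix a assume "a \<in> Ar (sem D)"
    then obtain r where r: "is_path D r" "a = pclass D r" by (auto simp: sem_Ar)
    have rr: "is_path T (embD r)" using r embD_simps by metis
    show "snd Gq (in1_ar (sem_unc C D QPres) a) = in1_ar Q a"
      using in1_pclass[OF vC vD vQ r(1)] Gq_pclass[OF rr] interp_embD[OF r(1)] r(2) by simp
  qed
qed

definition Hob :: "'o \<Rightarrow> 'c + 'd" where
  "Hob ob = (if pi_ob Q ob then Inr (inv_into (Sorts D) (in1_ob Q) ob) else Inl (inv_into (Sorts C) (in0_ob Q) ob))"

definition Har :: "'a \<Rightarrow> (('c + 'd) \<times> ('cf + 'a + 'df) list) set" where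
  "Har a = (if pi_ar Q a = (False, False) then pclass T (embC (rep (inv_into (Ar (sem C)) (in0_ar Q) a)))
     else if pi_ar Q a = (True, True) then pclass T (embD (rep (inv_into (Ar (sem D)) (in1_ar Q) a)))
     else pclass T (Inl (inv_into (Sorts C) (in0_ob Q) (Dom K a)), [Inr (Inl a)]))"

definition "Hq = (Hob, Har)"

lemma H1: assumes "ob \<in> Ob K" shows "Hob ob \<in> Sorts T" "qob (Hob ob) = ob"
  using fib0[OF assms] fib1[OF assms] by (auto simp: Hob_def qob_def tot_simps)

lemma H3: assumes "s \<in> Sorts T" shows "Hob (qob s) = s"
  using assms ob0 ob1 by (auto simp: Hob_def qob_def tot_simps)

lemma H2: assumes a: "a \<in> Ar K" shows "Har a \<in> Ar (sem T)" "snd Gq (Har a) = a"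
proof -
  have "pi_ar Q a = (False, False) \<or> pi_ar Q a = (True, True) \<or> pi_ar Q a = (False, True)"
    using piar[OF a] piar_le[OF a] by (cases "pi_ob Q (Dom K a)"; cases "pi_ob Q (Cod K a)") auto
  moreover
  {
    assume c: "pi_ar Q a = (False, False)"
    then have "a \<in> in0_ar Q ` Ar (sem C)" using a QF(8) by auto
    then have Y: "inv_into (Ar (sem C)) (in0_ar Q) a \<in> Ar (sem C)" "in0_ar Q (inv_into (Ar (sem C)) (in0_ar Q) a) = a"
      by (auto intro: inv_into_into f_inv_into_f)
    note r = sem_rep[OF vC Y(1)]
    have rr: "is_path T (embC (rep (inv_into (Ar (sem C)) (in0_ar Q) a)))" using r embC_simps by metis
    have "Har a \<in> Ar (sem T) \<and> snd Gq (Har a) = a"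
      using c rr sem_ArI[OF rr] Gq_pclass[OF rr] interp_embC[OF r(1)] r(2) Y(2) by (simp add: Har_def)
  }
  moreover
  {
    assume c: "pi_ar Q a = (True, True)"
    then have "a \<in> in1_ar Q ` Ar (sem D)" using a QF(12) by auto
    then have Y: "inv_into (Ar (sem D)) (in1_ar Q) a \<in> Ar (sem D)" "in1_ar Q (inv_into (Ar (sem D)) (in1_ar Q) a) = a"
      by (auto intro: inv_into_into f_inv_into_f)
    note r = sem_rep[OF vD Y(1)]
    have rr: "is_path T (embD (rep (inv_into (Ar (sem D)) (in1_ar Q) a)))" using r embD_simps by metis
    have "Har a \<in> Ar (sem T) \<and> snd Gq (Har a) = a"
      using c rr sem_ArI[OF rr] Gq_pclass[OF rr] interp_embD[OF r(1)] r(2) Y(2) by (simp add: Har_def)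
  }
  moreover
  {
    assume c: "pi_ar Q a = (False, True)"
    have x: "a \<in> UFuns QPres" using a c by (simp add: QPres_simps)
    have f: "Inr (Inl a) \<in> Funs T" using x by (simp add: tot_simps)
    have p1: "is_path T (fsrc T (Inr (Inl a)), [Inr (Inl a)])"
      using f vT by (simp add: is_path_def valid_catpres_def)
    have e: "(fsrc T (Inr (Inl a)), [Inr (Inl a)]) = (Inl (inv_into (Sorts C) (in0_ob Q) (Dom K a)), [Inr (Inl a)])"
      by (simp add: tot_simps QPres_simps)
    have "Har a \<in> Ar (sem T) \<and> snd Gq (Har a) = a"
      using c sem_ArI[OF p1] Gq_pclass[OF p1] interp_single[OF f] e by (simp add: Har_def qsym_def)
  }
  ultimately show "Har a \<in> Ar (sem T)" "snd Gq (Har a) = a" by blast+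
qed

lemma H4: assumes X: "X \<in> Ar (sem T)" shows "Har (snd Gq X) = X"
proof -
  obtain p where p: "is_path T p" "X = pclass T p" using X by (auto simp: sem_Ar)
  have GX: "snd Gq X = interp p" using Gq_pclass[OF p(1)] p(2) by simp
  note ip = interp_facts[OF p(1)]
  have s: "fst p \<in> Sorts T" "path_end T p \<in> Sorts T" using p(1) path_end_in[OF vT p(1)] by (auto simp: is_path_def)
  have pa: "pi_ar Q (interp p) = (\<not> isl (fst p), \<not> isl (path_end T p))"
    using piar[of "interp p"] ip qob_pi[OF s(1)] qob_pi[OF s(2)] by simp
  show ?thesis
  proof (cases "isl (path_end T p)")
    case True
    obtain r where r: "is_path C r" "p = embC r" using path_inl[OF p(1) True] by blast
    have fp: "isl (fst p)" using r by (simp add: embC_simps)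
    have ia: "interp p = in0_ar Q (pclass C r)" using interp_embC[OF r(1)] r(2) by simp
    have inv: "inv_into (Ar (sem C)) (in0_ar Q) (interp p) = pclass C r"
      using ia inv_into_f_f[OF QF(6) sem_ArI[OF r(1)]] by simp
    have rp: "peq C r (rep (pclass C r))" using rep_pclass[OF vC r(1)] .
    have "peq T (embC r) (embC (rep (pclass C r)))" using embC_peq[OF vC rp] .
    then have "pclass T (embC (rep (pclass C r))) = pclass T (embC r)"
      using pclass_eq_iff[OF vT] r embC_simps by metis
    then show ?thesis using GX pa True fp inv r p(2) by (simp add: Har_def)
  next
    case nend: False
    show ?thesis
    proof (cases "isl (fst p)")
      case False
      obtain r where r: "is_path D r" "p = embD r" using path_inr[OF p(1) False] by blast
      have ia: "interp p = in1_ar Q (pclass D r)" using interp_embD[OF r(1)] r(2) by simp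
      have inv: "inv_into (Ar (sem D)) (in1_ar Q) (interp p) = pclass D r"
        using ia inv_into_f_f[OF QF(10) sem_ArI[OF r(1)]] by simp
      have rp: "peq D r (rep (pclass D r))" using rep_pclass[OF vD r(1)] .
      have "peq T (embD r) (embD (rep (pclass D r)))" using embD_peq[OF vD rp] .
      then have "pclass T (embD (rep (pclass D r))) = pclass T (embD r)"
        using pclass_eq_iff[OF vT] r embD_simps by metis
      then show ?thesis using GX pa nend False inv r p(2) by (simp add: Har_def)
    next
      case fstl: True
      let ?a = "interp p"
      obtain c where c: "fst p = Inl c" "c \<in> Sorts C" using fstl s(1) by (cases "fst p") (auto simp: tot_simps)
      obtain d where d: "path_end T p = Inr d" "d \<in> Sorts D" using nend s(2) by (cases "path_end T p") (auto simp: tot_simps)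
      have dom: "Dom K ?a = in0_ob Q c" using ip c by (simp add: qob_def)
      have cod: "Cod K ?a = in1_ob Q d" using ip d by (simp add: qob_def)
      have c': "inv_into (Sorts C) (in0_ob Q) (Dom K ?a) = c" using dom ob0(3)[OF c(2)] by simp
      have d': "inv_into (Sorts D) (in1_ob Q) (Cod K ?a) = d" using cod ob1(3)[OF d(2)] by simp
      have x: "?a \<in> UFuns QPres" using ip pa fstl nend by (simp add: QPres_simps)
      have f: "Inr (Inl ?a) \<in> Funs T" using x by (simp add: tot_simps)
      have p1: "is_path T (Inl c, [Inr (Inl ?a)])"
        using f c(2) c' by (simp add: is_path_def tot_simps QPres_simps)
      have pe1: "path_end T (Inl c, [Inr (Inl ?a)]) = Inr d"
        using d' by (simp add: path_end_def tot_simps QPres_simps)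
      have i1: "interp (Inl c, [Inr (Inl ?a)]) = ?a"
        using interp_single[OF f] c' by (simp add: qsym_def tot_simps QPres_simps)
      have "(p, (Inl c, [Inr (Inl ?a)])) \<in> UEqs QPres"
        unfolding QPres_UEqs using p(1) p1 c d pe1 i1 by (simp add: cross_path_def parallel_def)
      then have "peq T p (Inl c, [Inr (Inl ?a)])" by (intro peq.peq_ax) (simp add: Eqs_T)
      then have "pclass T (Inl c, [Inr (Inl ?a)]) = pclass T p"
        using pclass_eq_iff[OF vT p(1)] by (metis pclass_eq_iff[OF vT p1] peq_sym)
      then show ?thesis using GX pa fstl nend c' p(2) by (simp add: Har_def)
    qed
  qed
qed

lemma ess_surj: "\<exists>P :: ('c, 'd, 'cf, 'df, 'a) uncpres. valid_unc C D P \<and> prof_iso (sem C) (sem D) (sem_unc C D P) Q"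
proof (intro exI conjI)
  show "valid_unc C D QPres" using vQ .
  have PA: "is_profunctor (sem C) (sem D) (sem_unc C D QPres)" using part_A[OF vC vD vQ] .
  have HG: "fun_eq_on (pcat (sem_unc C D QPres)) (fun_comp Hq Gq) (\<lambda>ob. ob, \<lambda>a. a)"
    using H3 H4 by (simp add: fun_eq_on_def fun_comp_def Hq_def Gq_def sem_unc_simps sem_Ob)
  have GH: "fun_eq_on K (fun_comp Gq Hq) (\<lambda>ob. ob, \<lambda>a. a)"
    using H1 H2 by (simp add: fun_eq_on_def fun_comp_def Hq_def Gq_def)
  have Hm: "prof_morph (sem C) (sem D) Q (sem_unc C D QPres) Hq"
    by (rule inverse_prof_morph[OF PA QP Gq_morph])
      (use H1 H2 HG GH in \<open>auto simp: Hq_def sem_unc_simps sem_Ob\<close>)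
  show "prof_iso (sem C) (sem D) (sem_unc C D QPres) Q"
    unfolding prof_iso_def using Gq_morph Hm HG GH by blast
qed

end

theorem mainTheorem4:
  fixes C :: "('c, 'cf) catpres" and D :: "('d, 'df) catpres"
  assumes "valid_catpres C" and "valid_catpres D"
  shows
    \<comment> \<open>[[P]] is a profunctor [[C]] -/-> [[D]]\<close>
    "(\<forall>P :: ('c, 'd, 'cf, 'df, 'x) uncpres. valid_unc C D P \<longrightarrow>
        is_profunctor (sem C) (sem D) (sem_unc C D P)) \<and>
    \<comment> \<open>[[F]] is a morphism of profunctors\<close>
     (\<forall>(P :: ('c, 'd, 'cf, 'df, 'x) uncpres) (P' :: ('c, 'd, 'cf, 'df, 'y) uncpres) F.
        valid_unc C D P \<and> valid_unc C D P' \<and> unc_morph C D P P' F \<longrightarrow>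
        prof_morph (sem C) (sem D) (sem_unc C D P) (sem_unc C D P') (sem_unc_morph C D P' F)) \<and>
    \<comment> \<open>[[-]] is well defined on UnCurr_\<approx>(C, D)\<close>
     (\<forall>(P :: ('c, 'd, 'cf, 'df, 'x) uncpres) (P' :: ('c, 'd, 'cf, 'df, 'y) uncpres) F F'.
        valid_unc C D P \<and> valid_unc C D P' \<and> unc_morph C D P P' F \<and> unc_morph C D P P' F' \<and>
        unc_equiv C D P P' F F' \<longrightarrow>
        fun_eq_on (pcat (sem_unc C D P)) (sem_unc_morph C D P' F) (sem_unc_morph C D P' F')) \<and>
    \<comment> \<open>[[-]] preserves identities\<close>
     (\<forall>P :: ('c, 'd, 'cf, 'df, 'x) uncpres. valid_unc C D P \<longrightarrow>
        fun_eq_on (pcat (sem_unc C D P)) (sem_unc_morph C D P (unc_id P)) (\<lambda>ob. ob, \<lambda>a. a)) \<and>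
    \<comment> \<open>[[-]] preserves composition\<close>
     (\<forall>(P :: ('c, 'd, 'cf, 'df, 'x) uncpres) (P' :: ('c, 'd, 'cf, 'df, 'y) uncpres)
        (P'' :: ('c, 'd, 'cf, 'df, 'z) uncpres) F G.
        valid_unc C D P \<and> valid_unc C D P' \<and> valid_unc C D P'' \<and>
        unc_morph C D P P' F \<and> unc_morph C D P' P'' G \<longrightarrow>
        fun_eq_on (pcat (sem_unc C D P)) (sem_unc_morph C D P'' (unc_comp C D G F))
          (fun_comp (sem_unc_morph C D P'' G) (sem_unc_morph C D P' F))) \<and>
    \<comment> \<open>faithful\<close>
     (\<forall>(P :: ('c, 'd, 'cf, 'df, 'x) uncpres) (P' :: ('c, 'd, 'cf, 'df, 'y) uncpres) F F'.
        valid_unc C D P \<and> valid_unc C D P' \<and> unc_morph C D P P' F \<and> unc_morph C D P P' F' \<and>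
        fun_eq_on (pcat (sem_unc C D P)) (sem_unc_morph C D P' F) (sem_unc_morph C D P' F') \<longrightarrow>
        unc_equiv C D P P' F F') \<and>
    \<comment> \<open>full\<close>
     (\<forall>(P :: ('c, 'd, 'cf, 'df, 'x) uncpres) (P' :: ('c, 'd, 'cf, 'df, 'y) uncpres) G.
        valid_unc C D P \<and> valid_unc C D P' \<and>
        prof_morph (sem C) (sem D) (sem_unc C D P) (sem_unc C D P') G \<longrightarrow>
        (\<exists>F. unc_morph C D P P' F \<and>
             fun_eq_on (pcat (sem_unc C D P)) (sem_unc_morph C D P' F) G)) \<and>
    \<comment> \<open>essentially surjective\<close>
     (\<forall>Q :: ('c, ('c \<times> 'cf list) set, 'd, ('d \<times> 'df list) set, 'o, 'a) profunctor.
        is_profunctor (sem C) (sem D) Q \<longrightarrow>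
        (\<exists>P :: ('c, 'd, 'cf, 'df, 'a) uncpres. valid_unc C D P \<and>
           prof_iso (sem C) (sem D) (sem_unc C D P) Q))"
proof (intro conjI allI impI)
  fix P :: "('c, 'd, 'cf, 'df, 'x) uncpres"
  assume "valid_unc C D P"
  then show "is_profunctor (sem C) (sem D) (sem_unc C D P)" using part_A[OF assms] by blast
next
  fix P :: "('c, 'd, 'cf, 'df, 'x) uncpres" and P' :: "('c, 'd, 'cf, 'df, 'y) uncpres" and F
  assume "valid_unc C D P \<and> valid_unc C D P' \<and> unc_morph C D P P' F"
  then show "prof_morph (sem C) (sem D) (sem_unc C D P) (sem_unc C D P') (sem_unc_morph C D P' F)"
    using part_B[OF assms] by blast
next
  fix P :: "('c, 'd, 'cf, 'df, 'x) uncpres" and P' :: "('c, 'd, 'cf, 'df, 'y) uncpres" and F F'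
  assume "valid_unc C D P \<and> valid_unc C D P' \<and> unc_morph C D P P' F \<and> unc_morph C D P P' F' \<and>
        unc_equiv C D P P' F F'"
  then show "fun_eq_on (pcat (sem_unc C D P)) (sem_unc_morph C D P' F) (sem_unc_morph C D P' F')"
    using part_C[OF assms] by blast
next
  fix P :: "('c, 'd, 'cf, 'df, 'x) uncpres"
  assume "valid_unc C D P"
  then show "fun_eq_on (pcat (sem_unc C D P)) (sem_unc_morph C D P (unc_id P)) (\<lambda>ob. ob, \<lambda>a. a)"
    using part_D[OF assms] by blast
next
  fix P :: "('c, 'd, 'cf, 'df, 'x) uncpres" and P' :: "('c, 'd, 'cf, 'df, 'y) uncpres"
    and P'' :: "('c, 'd, 'cf, 'df, 'z) uncpres" and F G
  assume "valid_unc C D P \<and> valid_unc C D P' \<and> valid_unc C D P'' \<and>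
        unc_morph C D P P' F \<and> unc_morph C D P' P'' G"
  then show "fun_eq_on (pcat (sem_unc C D P)) (sem_unc_morph C D P'' (unc_comp C D G F))
          (fun_comp (sem_unc_morph C D P'' G) (sem_unc_morph C D P' F))"
    using part_E[OF assms] by blast
next
  fix P :: "('c, 'd, 'cf, 'df, 'x) uncpres" and P' :: "('c, 'd, 'cf, 'df, 'y) uncpres" and F F'
  assume "valid_unc C D P \<and> valid_unc C D P' \<and> unc_morph C D P P' F \<and> unc_morph C D P P' F' \<and>
        fun_eq_on (pcat (sem_unc C D P)) (sem_unc_morph C D P' F) (sem_unc_morph C D P' F')"
  then show "unc_equiv C D P P' F F'" using part_F[OF assms] by blast
next
  fix P :: "('c, 'd, 'cf, 'df, 'x) uncpres" and P' :: "('c, 'd, 'cf, 'df, 'y) uncpres" and G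
  assume "valid_unc C D P \<and> valid_unc C D P' \<and>
        prof_morph (sem C) (sem D) (sem_unc C D P) (sem_unc C D P') G"
  then show "\<exists>F. unc_morph C D P P' F \<and> fun_eq_on (pcat (sem_unc C D P)) (sem_unc_morph C D P' F) G"
    using part_G[OF assms] by blast
next
  fix Q :: "('c, ('c \<times> 'cf list) set, 'd, ('d \<times> 'df list) set, 'o, 'a) profunctor"
  assume "is_profunctor (sem C) (sem D) Q"
  then show "\<exists>P :: ('c, 'd, 'cf, 'df, 'a) uncpres. valid_unc C D P \<and>
           prof_iso (sem C) (sem D) (sem_unc C D P) Q"
    using qpro.ess_surj[OF qpro.intro[OF assms]] by blast
qed

end
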